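(* Let a lattice $\Lambda\subset\mathbb R^3$ have Voronoi type $V_2$, i.e. its Voronoi domain is a hexa-rhombic dodecahedron. (a) $\Lambda$ has an obtuse superbase $(v_0,v_1,v_2,v_3)$ with one pair of orthogonal vectors, say $v_2\cdot v_3=0$. Then any obtuse superbase of $\Lambda$ is isometric to one of the obtuse superbases $B_1=\{v_0,v_1,v_2,v_3\}$ and $B_2=\{v_0+v_3,\,v_1+v_3,\,v_2,\,-v_3\}$. (b) If an obtuse superbase $B_1=(v_0,v_1,v_2,v_3)$ with $v_2\cdot v_3=0$ has coform $\begin{pmatrix}0&p_{13}&p_{12}\\ p_{01}&p_{02}&p_{03}\end{pmatrix}$ (so $p_{23}=0$), then the obtuse superbase $B_2=(v_0+v_3,\,v_1+v_3,\,v_2,\,-v_3)$ has coform $\begin{pmatrix}0&p_{03}&p_{12}\\ p_{01}&p_{02}&p_{13}\end{pmatrix}$. (c) Every obtuse superbase $B$ of $\Lambda$ has exactly one zero conorm. Using the 24 index-permutations, its coform can be written as $\begin{pmatrix}0&p_{13}&p_{12}\\ p_{01}&p_{02}&p_{03}\end{pmatrix}$ with $p_{23}=0$, and these forms over all obtuse superbases of $\Lambda$ are related by the symmetry group $D_4$ of a square acting on the $2\times2$ submatrix $\begin{pmatrix}p_{13}&p_{12}\\ p_{02}&p_{03}\end{pmatrix}$, where the corners of the square in cyclic order are $p_{13},p_{12},p_{03},p_{02}$.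
   Context: A lattice $\Lambda\subset\mathbb R^3$ is the set of integer combinations of a basis. A superbase is $(v_0,v_1,v_2,v_3)$ with $v_1,v_2,v_3$ a basis of $\Lambda$ and $v_0=-v_1-v_2-v_3$; conorms $p_{ij}=-v_i\cdot v_j$ ($i\ne j$, $p_{ij}=p_{ji}$); obtuse if all $p_{ij}\ge0$. The coform is $\begin{pmatrix}p_{23}&p_{13}&p_{12}\\ p_{01}&p_{02}&p_{03}\end{pmatrix}$. An index-permutation $\sigma\in S_4$ maps $p_{ij}\mapsto p_{\sigma(i)\sigma(j)}$. Two superbases are isometric if an isometry of $\mathbb R^3$ fixing the origin maps one onto the other as sets of vectors. The Voronoi domain is $V(\Lambda)=\{p: |p|\le|p-v|\ \forall v\in\Lambda\}$. *)

theory Defs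
  imports "HOL-Analysis.Analysis" "HOL-Combinatorics.Permutations"
begin

type_synonym vec3 = "real^3"

definition lattice_gen :: "vec3 \<Rightarrow> vec3 \<Rightarrow> vec3 \<Rightarrow> vec3 set" where
  "lattice_gen b1 b2 b3 =
     {of_int i *\<^sub>R b1 + of_int j *\<^sub>R b2 + of_int k *\<^sub>R b3 | i j k :: int. True}"

definition is_lattice_basis :: "vec3 set \<Rightarrow> vec3 \<Rightarrow> vec3 \<Rightarrow> vec3 \<Rightarrow> bool" where
  "is_lattice_basis L b1 b2 b3 \<longleftrightarrow>
     b1 \<noteq> b2 \<and> b1 \<noteq> b3 \<and> b2 \<noteq> b3 \<and> independent {b1, b2, b3} \<and>
     L = lattice_gen b1 b2 b3"

definition is_lattice :: "vec3 set \<Rightarrow> bool" where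
  "is_lattice L \<longleftrightarrow> (\<exists>b1 b2 b3. is_lattice_basis L b1 b2 b3)"

text \<open>A superbase is indexed by 0,1,2,3 (values at other indices are irrelevant).\<close>
definition is_superbase :: "vec3 set \<Rightarrow> (nat \<Rightarrow> vec3) \<Rightarrow> bool" where
  "is_superbase L v \<longleftrightarrow> is_lattice_basis L (v 1) (v 2) (v 3) \<and> v 0 = - (v 1 + v 2 + v 3)"

definition conorm :: "(nat \<Rightarrow> vec3) \<Rightarrow> nat \<Rightarrow> nat \<Rightarrow> real" where
  "conorm v i j = - (v i \<bullet> v j)"

definition is_obtuse :: "(nat \<Rightarrow> vec3) \<Rightarrow> bool" where
  "is_obtuse v \<longleftrightarrow> (\<forall>i<4. \<forall>j<4. i \<noteq> j \<longrightarrow> conorm v i j \<ge> 0)"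

definition obtuse_superbase :: "vec3 set \<Rightarrow> (nat \<Rightarrow> vec3) \<Rightarrow> bool" where
  "obtuse_superbase L v \<longleftrightarrow> is_superbase L v \<and> is_obtuse v"

definition sb_set :: "(nat \<Rightarrow> vec3) \<Rightarrow> vec3 set" where
  "sb_set v = {v 0, v 1, v 2, v 3}"

text \<open>Two superbases are isometric: an isometry of R^3 fixing the origin
  (i.e. an orthogonal linear map) maps one onto the other as sets of vectors.\<close>
definition sb_isometric :: "(nat \<Rightarrow> vec3) \<Rightarrow> (nat \<Rightarrow> vec3) \<Rightarrow> bool" where
  "sb_isometric u v \<longleftrightarrow> (\<exists>f. orthogonal_transformation f \<and> f ` sb_set u = sb_set v)"

definition sbB2 :: "(nat \<Rightarrow> vec3) \<Rightarrow> (nat \<Rightarrow> vec3)" where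
  "sbB2 v = (\<lambda>i. if i = 0 then v 0 + v 3 else if i = 1 then v 1 + v 3
                 else if i = 2 then v 2 else - v 3)"

definition voronoi_domain :: "vec3 set \<Rightarrow> vec3 set" where
  "voronoi_domain L = {p. \<forall>v\<in>L. norm p \<le> norm (p - v)}"

definition comb_equiv :: "vec3 set \<Rightarrow> vec3 set \<Rightarrow> bool" where
  "comb_equiv P Q \<longleftrightarrow> (\<exists>\<phi>. bij_betw \<phi> {F. F face_of P} {G. G face_of Q} \<and>
      (\<forall>F1 F2. F1 face_of P \<longrightarrow> F2 face_of P \<longrightarrow> (F1 \<subseteq> F2 \<longleftrightarrow> \<phi> F1 \<subseteq> \<phi> F2)))"

text \<open>A reference hexa-rhombic (elongated) dodecahedron: 18 vertices, 4 hexagonal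
  faces (normals (+-1,+-1,0)) and 8 rhombic faces.\<close>
definition hexa_rhombic_dodecahedron :: "vec3 set" where
  "hexa_rhombic_dodecahedron = convex hull
     ({vector [a, b, c] | a b c :: real. a \<in> {-1,1} \<and> b \<in> {-1,1} \<and> c \<in> {-2,2}}
      \<union> {vector [0, 0, 3], vector [0, 0, -3]}
      \<union> {vector [a, 0, c] | a c :: real. a \<in> {-2,2} \<and> c \<in> {-1,1}}
      \<union> {vector [0, b, c] | b c :: real. b \<in> {-2,2} \<and> c \<in> {-1,1}})"

definition voronoi_type_V2 :: "vec3 set \<Rightarrow> bool" where
  "voronoi_type_V2 L \<longleftrightarrow> comb_equiv (voronoi_domain L) hexa_rhombic_dodecahedron"

text \<open>Corners of the square in cyclic order: p13, p12, p03, p02.\<close>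
definition sq_corner :: "(nat \<Rightarrow> vec3) \<Rightarrow> nat \<Rightarrow> real" where
  "sq_corner v k = (let ij = [(1::nat,3::nat), (1,2), (0,3), (0,2)] ! k in conorm v (fst ij) (snd ij))"

definition D4 :: "(nat \<Rightarrow> nat) set" where
  "D4 = {(\<lambda>k. (r + k) mod 4) | r. r < 4} \<union> {(\<lambda>k. (r + 4 - k) mod 4) | r. r < 4}"

end

theory Submission
  imports Defs
begin

lemma sum4: "(\<Sum>k\<in>{0..3::nat}. f k) = f 0 + f 1 + f 2 + f 3"
  by (simp add: eval_nat_numeral atLeast0_atMost_Suc add_ac)

lemma conorm_sym: "conorm v i j = conorm v j i"
  by (simp add: conorm_def inner_commute)

definition ind :: "nat set \<Rightarrow> nat \<Rightarrow> real" where
  "ind S i = (if i \<in> S then 1 else 0)"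

definition cutv :: "(nat \<Rightarrow> vec3) \<Rightarrow> nat set \<Rightarrow> real" where
  "cutv v S = (1/2) * (\<Sum>i\<in>{0..3}. \<Sum>j\<in>{0..3}. conorm v i j * (ind S i - ind S j)^2)"

lemma selling_raw:
  fixes a b c :: vec3
  shows "norm (n0 *\<^sub>R (-(a+b+c)) + n1 *\<^sub>R a + n2 *\<^sub>R b + n3 *\<^sub>R c)^2 =
    (a\<bullet>(a+b+c)) * (n1-n0)^2 + (b\<bullet>(a+b+c)) * (n2-n0)^2 + (c\<bullet>(a+b+c)) * (n3-n0)^2
    - (a\<bullet>b) * (n1-n2)^2 - (a\<bullet>c)*(n1-n3)^2 - (b\<bullet>c)*(n2-n3)^2"
  unfolding power2_norm_eq_inner
  by (simp add: inner_add_left inner_diff_left inner_diff_right inner_commute algebra_simps power2_eq_square)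

lemma selling4:
  assumes v0: "v 0 = - (v 1 + v 2 + v 3)"
  shows "norm (\<Sum>k\<in>{0..3::nat}. n k *\<^sub>R v k)^2 =
     (1/2) * (\<Sum>i\<in>{0..3}. \<Sum>j\<in>{0..3}. conorm v i j * (n i - n j)^2)"
proof -
  have "norm (\<Sum>k\<in>{0..3::nat}. n k *\<^sub>R v k)^2 =
    norm (n 0 *\<^sub>R (-(v 1+v 2+v 3)) + n 1 *\<^sub>R v 1 + n 2 *\<^sub>R v 2 + n 3 *\<^sub>R v 3)^2"
    by (simp add: sum4 v0)
  also have "\<dots> = (v 1\<bullet>(v 1+v 2+v 3)) * (n 1-n 0)^2 + (v 2\<bullet>(v 1+v 2+v 3)) * (n 2-n 0)^2 + (v 3\<bullet>(v 1+v 2+v 3)) * (n 3-n 0)^2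
    - (v 1\<bullet>v 2) * (n 1-n 2)^2 - (v 1\<bullet>v 3)*(n 1-n 3)^2 - (v 2\<bullet>v 3)*(n 2-n 3)^2"
    by (rule selling_raw)
  also have "\<dots> = (1/2) * (\<Sum>i\<in>{0..3}. \<Sum>j\<in>{0..3}. conorm v i j * (n i - n j)^2)"
    by (simp add: sum4 conorm_def v0 inner_add_left inner_add_right inner_commute power2_commute algebra_simps)
  finally show ?thesis .
qed


lemma lov_core:
  fixes N0 N1 N2 N3 U0 U1 U2 U3 P01 P02 P03 P12 P13 P23 :: real
  assumes o: "N0 \<ge> N1" "N1 \<ge> N2" "N2 \<ge> N3" and s: "U0+U1+U2+U3 = 0"
   and c1: "U0 \<le> (P01+P02+P03)/2" and c2: "U0+U1 \<le> (P02+P03+P12+P13)/2"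
   and c3: "U0+U1+U2 \<le> (P03+P13+P23)/2"
  shows "N0*U0+N1*U1+N2*U2+N3*U3 \<le> (P01*\<bar>N0-N1\<bar> + P02*\<bar>N0-N2\<bar> + P03*\<bar>N0-N3\<bar> + P12*\<bar>N1-N2\<bar> + P13*\<bar>N1-N3\<bar> + P23*\<bar>N2-N3\<bar>)/2"
proof -
  have e1: "(N0-N1)*U0 \<le> (N0-N1)*((P01+P02+P03)/2)" using o c1 by (intro mult_left_mono) auto
  have e2: "(N1-N2)*(U0+U1) \<le> (N1-N2)*((P02+P03+P12+P13)/2)" using o c2 by (intro mult_left_mono) auto
  have e3: "(N2-N3)*(U0+U1+U2) \<le> (N2-N3)*((P03+P13+P23)/2)" using o c3 by (intro mult_left_mono) auto
  have l: "N0*U0+N1*U1+N2*U2+N3*U3 = (N0-N1)*U0 + (N1-N2)*(U0+U1) + (N2-N3)*(U0+U1+U2) + N3*(U0+U1+U2+U3)"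
    by (simp add: algebra_simps)
  have z: "N3*(U0+U1+U2+U3) = 0" using s by simp
  have r: "(P01*\<bar>N0-N1\<bar> + P02*\<bar>N0-N2\<bar> + P03*\<bar>N0-N3\<bar> + P12*\<bar>N1-N2\<bar> + P13*\<bar>N1-N3\<bar> + P23*\<bar>N2-N3\<bar>)/2
     = (N0-N1)*((P01+P02+P03)/2) + (N1-N2)*((P02+P03+P12+P13)/2) + (N2-N3)*((P03+P13+P23)/2)"
  proof -
    have "\<bar>N0-N1\<bar> = N0-N1" "\<bar>N0-N2\<bar> = N0-N2" "\<bar>N0-N3\<bar> = N0-N3" "\<bar>N1-N2\<bar> = N1-N2" "\<bar>N1-N3\<bar> = N1-N3" "\<bar>N2-N3\<bar> = N2-N3"
      using o by auto
    then show ?thesis by (simp only:) (simp add: field_simps)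
  qed
  show ?thesis using e1 e2 e3 l r z by linarith
qed

lemma lov_core_eq:
  fixes N0 N1 N2 N3 U0 U1 U2 U3 P01 P02 P03 P12 P13 P23 :: real
  assumes o: "N0 > N1" "N1 > N2" "N2 > N3" and s: "U0+U1+U2+U3 = 0"
   and c1: "U0 \<le> (P01+P02+P03)/2" and c2: "U0+U1 \<le> (P02+P03+P12+P13)/2"
   and c3: "U0+U1+U2 \<le> (P03+P13+P23)/2"
   and eq: "N0*U0+N1*U1+N2*U2+N3*U3 \<ge> (P01*\<bar>N0-N1\<bar> + P02*\<bar>N0-N2\<bar> + P03*\<bar>N0-N3\<bar> + P12*\<bar>N1-N2\<bar> + P13*\<bar>N1-N3\<bar> + P23*\<bar>N2-N3\<bar>)/2"
  shows "U0 = (P01+P02+P03)/2 \<and> U0+U1 = (P02+P03+P12+P13)/2 \<and> U0+U1+U2 = (P03+P13+P23)/2"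
proof -
  have e1: "(N0-N1)*U0 \<le> (N0-N1)*((P01+P02+P03)/2)" using o c1 by (intro mult_left_mono) auto
  have e2: "(N1-N2)*(U0+U1) \<le> (N1-N2)*((P02+P03+P12+P13)/2)" using o c2 by (intro mult_left_mono) auto
  have e3: "(N2-N3)*(U0+U1+U2) \<le> (N2-N3)*((P03+P13+P23)/2)" using o c3 by (intro mult_left_mono) auto
  have l: "N0*U0+N1*U1+N2*U2+N3*U3 = (N0-N1)*U0 + (N1-N2)*(U0+U1) + (N2-N3)*(U0+U1+U2) + N3*(U0+U1+U2+U3)"
    by (simp add: algebra_simps)
  have z: "N3*(U0+U1+U2+U3) = 0" using s by simp
  have r: "(P01*\<bar>N0-N1\<bar> + P02*\<bar>N0-N2\<bar> + P03*\<bar>N0-N3\<bar> + P12*\<bar>N1-N2\<bar> + P13*\<bar>N1-N3\<bar> + P23*\<bar>N2-N3\<bar>)/2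
     = (N0-N1)*((P01+P02+P03)/2) + (N1-N2)*((P02+P03+P12+P13)/2) + (N2-N3)*((P03+P13+P23)/2)"
  proof -
    have "\<bar>N0-N1\<bar> = N0-N1" "\<bar>N0-N2\<bar> = N0-N2" "\<bar>N0-N3\<bar> = N0-N3" "\<bar>N1-N2\<bar> = N1-N2" "\<bar>N1-N3\<bar> = N1-N3" "\<bar>N2-N3\<bar> = N2-N3"
      using o by auto
    then show ?thesis by (simp only:) (simp add: field_simps)
  qed
  have f1: "(N0-N1)*U0 = (N0-N1)*((P01+P02+P03)/2)" using e1 e2 e3 l r z eq by linarith
  have f2: "(N1-N2)*(U0+U1) = (N1-N2)*((P02+P03+P12+P13)/2)" using e1 e2 e3 l r z eq by linarith
  have f3: "(N2-N3)*(U0+U1+U2) = (N2-N3)*((P03+P13+P23)/2)" using e1 e2 e3 l r z eq by linarith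
  show ?thesis using f1 f2 f3 o by auto
qed

lemma sort4:
  fixes n :: "nat \<Rightarrow> real"
  shows "\<exists>\<sigma>. \<sigma> permutes {0..3} \<and> n (\<sigma> 0) \<ge> n (\<sigma> 1) \<and> n (\<sigma> 1) \<ge> n (\<sigma> 2) \<and> n (\<sigma> 2) \<ge> n (\<sigma> 3)"
proof -
  define xs where "xs = sort_key (\<lambda>k. - n k) [0,1,2,3::nat]"
  have len: "length xs = 4" by (simp add: xs_def)
  have dist: "distinct xs" by (simp add: xs_def)
  have set: "set xs = {0..3}" by (auto simp: xs_def)
  have sorted: "sorted (map (\<lambda>k. - n k) xs)" by (simp add: xs_def del: sort_key_simps)
  define \<sigma> where "\<sigma> k = (if k < 4 then xs ! k else k)" for k
  have "bij_betw ((!) xs) {..<length xs} (set xs)" using dist by (rule bij_betw_nth) auto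
  hence b: "bij_betw ((!) xs) {0..3} {0..3}" using len set
    by (simp add: atLeast0AtMost lessThan_Suc_atMost eval_nat_numeral)
  have "bij_betw \<sigma> {0..3} {0..3}"
    using b by (rule bij_betw_cong[THEN iffD1, rotated]) (auto simp: \<sigma>_def)
  hence perm: "\<sigma> permutes {0..3}" by (rule bij_imp_permutes) (auto simp: \<sigma>_def)
  have mono: "- n (xs ! i) \<le> - n (xs ! j)" if "i \<le> j" "j < 4" for i j
    using sorted that len by (auto simp: sorted_iff_nth_mono)
  show ?thesis using perm mono[of 0 1] mono[of 1 2] mono[of 2 3] by (auto simp: \<sigma>_def)
qed


definition cutp :: "(nat \<Rightarrow> nat \<Rightarrow> real) \<Rightarrow> nat set \<Rightarrow> real" where
  "cutp p S = (1/2) * (\<Sum>i\<in>{0..3}. \<Sum>j\<in>{0..3}. p i j * (ind S i - ind S j)^2)"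

lemma cutv_cutp: "cutv v S = cutp (conorm v) S"
  by (simp add: cutv_def cutp_def)

lemma perm_sum4:
  assumes "\<sigma> permutes {0..3::nat}"
  shows "(\<Sum>k\<in>{0..3}. f k) = f (\<sigma> 0) + f (\<sigma> 1) + f (\<sigma> 2) + f (\<sigma> 3)"
  using sum.permute[OF assms, of f] by (simp add: sum4)

lemma ind_perm:
  assumes "\<sigma> permutes S"
  shows "ind (\<sigma> ` A) (\<sigma> r) = ind A r"
  using permutes_inj[OF assms] by (simp add: ind_def inj_image_mem_iff)

lemma lovasz:
  fixes p :: "nat \<Rightarrow> nat \<Rightarrow> real" and t n :: "nat \<Rightarrow> real"
  assumes sym: "\<And>i j. p i j = p j i" and ts: "(\<Sum>k\<in>{0..3}. t k) = 0"
   and cuts: "\<And>S. S \<subseteq> {0..3} \<Longrightarrow> (\<Sum>k\<in>{0..3}. ind S k * t k) \<le> cutp p S / 2"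
  shows "(\<Sum>k\<in>{0..3}. n k * t k) \<le> (\<Sum>i\<in>{0..3}. \<Sum>j\<in>{0..3}. p i j * \<bar>n i - n j\<bar>) / 4"
proof -
  obtain \<sigma> where sp: "\<sigma> permutes {0..3}" and o: "n (\<sigma> 0) \<ge> n (\<sigma> 1)" "n (\<sigma> 1) \<ge> n (\<sigma> 2)" "n (\<sigma> 2) \<ge> n (\<sigma> 3)"
    using sort4 by blast
  have img: "\<sigma> ` A \<subseteq> {0..3}" if "A \<subseteq> {0..3}" for A
    using permutes_image[OF sp] that by auto
  note ps = perm_sum4[OF sp] ind_perm[OF sp] permutes_inj[OF sp, THEN inj_eq]
  have c1: "(\<Sum>k\<in>{0..3}. ind (\<sigma>`{0}) k * t k) \<le> cutp p (\<sigma>`{0}) / 2" by (rule cuts, rule img) auto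
  have c2: "(\<Sum>k\<in>{0..3}. ind (\<sigma>`{0,1}) k * t k) \<le> cutp p (\<sigma>`{0,1}) / 2" by (rule cuts, rule img) auto
  have c3: "(\<Sum>k\<in>{0..3}. ind (\<sigma>`{0,1,2}) k * t k) \<le> cutp p (\<sigma>`{0,1,2}) / 2" by (rule cuts, rule img) auto
  have "n (\<sigma> 0) * t (\<sigma> 0) + n (\<sigma> 1) * t (\<sigma> 1) + n (\<sigma> 2) * t (\<sigma> 2) + n (\<sigma> 3) * t (\<sigma> 3)
     \<le> (p (\<sigma> 0) (\<sigma> 1) * \<bar>n (\<sigma> 0) - n (\<sigma> 1)\<bar> + p (\<sigma> 0) (\<sigma> 2) * \<bar>n (\<sigma> 0) - n (\<sigma> 2)\<bar> + p (\<sigma> 0) (\<sigma> 3) * \<bar>n (\<sigma> 0) - n (\<sigma> 3)\<bar>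
       + p (\<sigma> 1) (\<sigma> 2) * \<bar>n (\<sigma> 1) - n (\<sigma> 2)\<bar> + p (\<sigma> 1) (\<sigma> 3) * \<bar>n (\<sigma> 1) - n (\<sigma> 3)\<bar> + p (\<sigma> 2) (\<sigma> 3) * \<bar>n (\<sigma> 2) - n (\<sigma> 3)\<bar>)/2"
    apply (rule lov_core[OF o])
    using ts c1 c2 c3 by (simp_all add: ps cutp_def ind_def sym)
  also have "\<dots> = (\<Sum>i\<in>{0..3}. \<Sum>j\<in>{0..3}. p i j * \<bar>n i - n j\<bar>) / 4"
    by (simp add: ps sym abs_minus_commute)
  finally show ?thesis by (simp add: ps)
qed


locale sbase =
  fixes L :: "vec3 set" and v :: "nat \<Rightarrow> vec3"
  assumes sb: "is_superbase L v"
begin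

lemma v0: "v 0 = - (v 1 + v 2 + v 3)" using sb by (simp add: is_superbase_def)
lemma L_eq: "L = lattice_gen (v 1) (v 2) (v 3)" using sb by (simp add: is_superbase_def is_lattice_basis_def)
lemma indep: "independent {v 1, v 2, v 3}" using sb by (simp add: is_superbase_def is_lattice_basis_def)
lemma dist: "v 1 \<noteq> v 2" "v 1 \<noteq> v 3" "v 2 \<noteq> v 3" using sb by (auto simp add: is_superbase_def is_lattice_basis_def)

lemma sum_v: "(\<Sum>k\<in>{0..3}. v k) = 0" by (simp add: sum4 v0)

lemma span_UNIV: "span {v 1, v 2, v 3} = UNIV"
proof -
  have "card {v 1, v 2, v 3} = 3" using dist by simp
  hence "dim (UNIV::vec3 set) \<le> card {v 1, v 2, v 3}" by simp
  from card_ge_dim_independent[OF _ indep this] show ?thesis by auto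
qed

lemma ext_eq:
  assumes "x \<bullet> v 1 = y \<bullet> v 1" "x \<bullet> v 2 = y \<bullet> v 2" "x \<bullet> v 3 = y \<bullet> v 3"
  shows "x = y"
proof -
  have "orthogonal (x - y) z" if "z \<in> span {v 1, v 2, v 3}" for z
    by (rule orthogonal_to_span[OF that]) (use assms in \<open>auto simp: orthogonal_def inner_diff_left\<close>)
  hence "orthogonal (x - y) (x - y)" using span_UNIV by auto
  thus ?thesis by (simp add: orthogonal_def)
qed

definition Mv :: "real^3^3" where "Mv = vector [v 1, v 2, v 3]"

lemma Mv_app: "Mv *v x = vector [v 1 \<bullet> x, v 2 \<bullet> x, v 3 \<bullet> x]"
  by (simp add: vec_eq_iff Mv_def matrix_vector_mult_def inner_vec_def forall_3 vector_3)

lemma exists_pt: "\<exists>x. x \<bullet> v 1 = T1 \<and> x \<bullet> v 2 = T2 \<and> x \<bullet> v 3 = T3"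
proof -
  have lin: "linear ((*v) Mv)" by (rule matrix_vector_mul_linear)
  have "inj ((*v) Mv)"
  proof (rule injI)
    fix x y assume "Mv *v x = Mv *v y"
    hence "vector [v 1 \<bullet> x, v 2 \<bullet> x, v 3 \<bullet> x] = (vector [v 1 \<bullet> y, v 2 \<bullet> y, v 3 \<bullet> y] :: real^3)"
      by (simp add: Mv_app)
    hence "x \<bullet> v 1 = y \<bullet> v 1" "x \<bullet> v 2 = y \<bullet> v 2" "x \<bullet> v 3 = y \<bullet> v 3"
      by (simp_all add: vec_eq_iff forall_3 vector_3 inner_commute)
    thus "x = y" by (rule ext_eq)
  qed
  hence "surj ((*v) Mv)" using lin by (rule eucl.linear_inj_imp_surj[rotated])
  then obtain x where "Mv *v x = vector [T1, T2, T3]" by (metis surjD)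
  hence "vector [v 1 \<bullet> x, v 2 \<bullet> x, v 3 \<bullet> x] = (vector [T1, T2, T3] :: real^3)" by (simp add: Mv_app)
  hence "x \<bullet> v 1 = T1 \<and> x \<bullet> v 2 = T2 \<and> x \<bullet> v 3 = T3"
    by (simp add: vec_eq_iff forall_3 vector_3 inner_commute)
  thus ?thesis by blast
qed

end

lemma int_abs_le_sq: "\<bar>real_of_int m\<bar> \<le> (real_of_int m)^2"
proof (cases "m = 0")
  case False
  hence "1 \<le> \<bar>real_of_int m\<bar>" by linarith
  hence "\<bar>real_of_int m\<bar> * 1 \<le> \<bar>real_of_int m\<bar> * \<bar>real_of_int m\<bar>" by (intro mult_left_mono) auto
  thus ?thesis by (simp add: power2_eq_square)
qed simp

definition antisym_s :: "(nat \<Rightarrow> nat \<Rightarrow> real) \<Rightarrow> bool" where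
  "antisym_s s \<longleftrightarrow> (\<forall>i j. s i j = - s j i)"

definition bnd_s :: "(nat \<Rightarrow> nat \<Rightarrow> real) \<Rightarrow> bool" where
  "bnd_s s \<longleftrightarrow> (\<forall>i j. \<bar>s i j\<bar> \<le> 1)"

lemma swap_sum_zero:
  fixes f :: "nat \<Rightarrow> nat \<Rightarrow> real"
  assumes "\<And>i j. f i j = - f j i"
  shows "(\<Sum>i\<in>A. \<Sum>j\<in>A. f i j) = 0"
proof -
  have "(\<Sum>i\<in>A. \<Sum>j\<in>A. f i j) = (\<Sum>j\<in>A. \<Sum>i\<in>A. f i j)" by (rule sum.swap)
  also have "\<dots> = - (\<Sum>j\<in>A. \<Sum>i\<in>A. f j i)"
    by (subst sum_negf[symmetric], rule sum.cong, simp, subst sum_negf[symmetric], rule sum.cong, simp, rule assms)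
  finally show ?thesis by simp
qed

lemma antisym_sum:
  fixes p s :: "nat \<Rightarrow> nat \<Rightarrow> real"
  assumes sym: "\<And>i j. p i j = p j i" and as: "\<And>i j. s i j = - s j i"
  shows "(\<Sum>k\<in>A. n k * (\<Sum>j\<in>A. p k j * s k j)) = (\<Sum>k\<in>A. \<Sum>j\<in>A. p k j * s k j * (n k - n j)) / 2"
proof -
  have "(\<Sum>k\<in>A. \<Sum>j\<in>A. p k j * s k j * n j) = (\<Sum>j\<in>A. \<Sum>k\<in>A. p k j * s k j * n j)" by (rule sum.swap)
  also have "\<dots> = - (\<Sum>j\<in>A. \<Sum>k\<in>A. p j k * s j k * n j)"
  proof -
    have e: "p k j * s k j * n j = - (p j k * s j k * n j)" for k j using sym[of k j] as[of k j] by simp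
    show ?thesis
      by (subst sum_negf[symmetric], rule sum.cong, simp, subst sum_negf[symmetric], rule sum.cong, simp, rule e)
  qed
  finally have *: "(\<Sum>k\<in>A. \<Sum>j\<in>A. p k j * s k j * n j) = - (\<Sum>k\<in>A. \<Sum>j\<in>A. p k j * s k j * n k)" .
  have "(\<Sum>k\<in>A. \<Sum>j\<in>A. p k j * s k j * (n k - n j)) = (\<Sum>k\<in>A. \<Sum>j\<in>A. p k j * s k j * n k) - (\<Sum>k\<in>A. \<Sum>j\<in>A. p k j * s k j * n j)"
    by (simp add: algebra_simps sum_subtractf)
  also have "\<dots> = 2 * (\<Sum>k\<in>A. n k * (\<Sum>j\<in>A. p k j * s k j))"
  proof -
    have a: "(\<Sum>k\<in>A. \<Sum>j\<in>A. p k j * s k j * n k) = (\<Sum>k\<in>A. n k * (\<Sum>j\<in>A. p k j * s k j))"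
      by (simp add: sum_distrib_left mult.commute mult.left_commute)
    show ?thesis by (simp only: * a)
  qed
  finally show ?thesis by simp
qed

context sbase begin

lemma p_sym: "conorm v i j = conorm v j i" by (rule conorm_sym)

lemma inL_int:
  assumes "\<And>k. n k = real_of_int (m k)"
  shows "(\<Sum>k\<in>{0..3}. n k *\<^sub>R v k) \<in> L"
proof -
  have "(\<Sum>k\<in>{0..3}. n k *\<^sub>R v k) = of_int (m 1 - m 0) *\<^sub>R v 1 + of_int (m 2 - m 0) *\<^sub>R v 2 + of_int (m 3 - m 0) *\<^sub>R v 3"
    by (simp add: sum4 v0 assms algebra_simps)
  thus ?thesis unfolding L_eq lattice_gen_def by blast
qed

lemma L_repr:
  assumes "y \<in> L"
  obtains m :: "nat \<Rightarrow> int" where "y = (\<Sum>k\<in>{0..3}. real_of_int (m k) *\<^sub>R v k)"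
proof -
  from assms obtain i j k :: int where y: "y = of_int i *\<^sub>R v 1 + of_int j *\<^sub>R v 2 + of_int k *\<^sub>R v 3"
    unfolding L_eq lattice_gen_def by blast
  define m :: "nat \<Rightarrow> int" where "m x = (if x = 1 then i else if x = 2 then j else if x = 3 then k else 0)" for x
  have "y = (\<Sum>l\<in>{0..3}. real_of_int (m l) *\<^sub>R v l)" by (simp add: sum4 m_def y)
  thus ?thesis by (rule that)
qed

lemma inner_sumv: "x \<bullet> (\<Sum>k\<in>{0..3}. n k *\<^sub>R v k) = (\<Sum>k\<in>{0..3}. n k * (x \<bullet> v k))"
  by (simp add: inner_sum_right)

definition cond :: "vec3 \<Rightarrow> bool" where
  "cond x \<longleftrightarrow> (\<forall>S\<subseteq>{0..3}. (\<Sum>k\<in>{0..3}. ind S k * (x \<bullet> v k)) \<le> cutv v S / 2)"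

lemma vor_iff_inner: "x \<in> voronoi_domain L \<longleftrightarrow> (\<forall>y\<in>L. 2 * (x \<bullet> y) \<le> y \<bullet> y)"
proof -
  have "norm x \<le> norm (x - y) \<longleftrightarrow> 2 * (x \<bullet> y) \<le> y \<bullet> y" for y
  proof -
    have "norm x \<le> norm (x - y) \<longleftrightarrow> x \<bullet> x \<le> (x - y) \<bullet> (x - y)" by (rule norm_le)
    also have "\<dots> \<longleftrightarrow> 2 * (x \<bullet> y) \<le> y \<bullet> y"
      by (simp add: inner_diff_left inner_diff_right inner_commute)
    finally show ?thesis .
  qed
  thus ?thesis by (simp add: voronoi_domain_def)
qed

lemma sum_tv: "(\<Sum>k\<in>{0..3}. x \<bullet> v k) = 0"
  using sum_v by (simp add: inner_sum_right[symmetric])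

lemma vor_cond: "x \<in> voronoi_domain L \<Longrightarrow> cond x"
  unfolding cond_def
proof (intro allI impI)
  fix S :: "nat set" assume x: "x \<in> voronoi_domain L" and S: "S \<subseteq> {0..3}"
  define y where "y = (\<Sum>k\<in>{0..3}. ind S k *\<^sub>R v k)"
  have "y \<in> L" unfolding y_def
    by (rule inL_int[of _ "\<lambda>k. if k \<in> S then 1 else 0"]) (simp add: ind_def)
  hence "2 * (x \<bullet> y) \<le> y \<bullet> y" using x vor_iff_inner by blast
  moreover have "y \<bullet> y = cutv v S" unfolding y_def
    using selling4[OF v0, of "ind S"] by (simp add: power2_norm_eq_inner cutv_def)
  moreover have "x \<bullet> y = (\<Sum>k\<in>{0..3}. ind S k * (x \<bullet> v k))" unfolding y_def by (rule inner_sumv)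
  ultimately show "(\<Sum>k\<in>{0..3}. ind S k * (x \<bullet> v k)) \<le> cutv v S / 2" by simp
qed

end

locale obase = sbase +
  assumes obt: "is_obtuse v"
begin

lemma p_nonneg: "i \<in> {0..3} \<Longrightarrow> j \<in> {0..3} \<Longrightarrow> i \<noteq> j \<Longrightarrow> conorm v i j \<ge> 0"
  using obt by (auto simp: is_obtuse_def)

lemma lov_x:
  assumes "cond x"
  shows "(\<Sum>k\<in>{0..3}. n k * (x \<bullet> v k)) \<le> (\<Sum>i\<in>{0..3}. \<Sum>j\<in>{0..3}. conorm v i j * \<bar>n i - n j\<bar>) / 4"
  by (rule lovasz[OF p_sym sum_tv]) (use assms in \<open>auto simp: cond_def cutv_cutp\<close>)

lemma cond_vor:
  assumes c: "cond x" shows "x \<in> voronoi_domain L"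
  unfolding vor_iff_inner
proof
  fix y assume yL: "y \<in> L"
  obtain m where y: "y = (\<Sum>k\<in>{0..3}. real_of_int (m k) *\<^sub>R v k)" using yL by (rule L_repr)
  have "x \<bullet> y \<le> (\<Sum>i\<in>{0..3}. \<Sum>j\<in>{0..3}. conorm v i j * \<bar>real_of_int (m i) - real_of_int (m j)\<bar>) / 4"
    unfolding y inner_sumv by (rule lov_x[OF c])
  also have "\<dots> \<le> (\<Sum>i\<in>{0..3}. \<Sum>j\<in>{0..3}. conorm v i j * (real_of_int (m i) - real_of_int (m j))^2) / 4"
  proof -
    have "conorm v i j * \<bar>real_of_int (m i) - real_of_int (m j)\<bar> \<le> conorm v i j * (real_of_int (m i) - real_of_int (m j))^2"
      if "i \<in> {0..3}" "j \<in> {0..3}" for i j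
    proof (cases "i = j")
      case False
      thus ?thesis using p_nonneg[OF that False] int_abs_le_sq[of "m i - m j"]
        by (intro mult_left_mono) auto
    qed simp
    thus ?thesis by (intro divide_right_mono sum_mono) auto
  qed
  also have "\<dots> = (y \<bullet> y) / 2"
    using selling4[OF v0, of "\<lambda>k. real_of_int (m k)"] by (simp add: y power2_norm_eq_inner)
  finally show "2 * (x \<bullet> y) \<le> y \<bullet> y" by simp
qed

lemma vor_eq_cond: "x \<in> voronoi_domain L \<longleftrightarrow> cond x"
  using vor_cond cond_vor by blast

end


lemma antisymD: "antisym_s s \<Longrightarrow> s i j = - s j i"
  unfolding antisym_s_def by blast

context sbase begin

definition Tv :: "(nat \<Rightarrow> nat \<Rightarrow> real) \<Rightarrow> nat \<Rightarrow> real" where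
  "Tv s k = (\<Sum>j\<in>{0..3}. conorm v k j * s k j) / 2"

definition Xp :: "(nat \<Rightarrow> nat \<Rightarrow> real) \<Rightarrow> vec3" where
  "Xp s = (SOME x. x \<bullet> v 1 = Tv s 1 \<and> x \<bullet> v 2 = Tv s 2 \<and> x \<bullet> v 3 = Tv s 3)"

lemma sumT: assumes "antisym_s s" shows "(\<Sum>k\<in>{0..3}. Tv s k) = 0"
proof -
  have "(\<Sum>k\<in>{0..3}. \<Sum>j\<in>{0..3}. conorm v k j * s k j) = 0"
  proof (rule swap_sum_zero)
    fix i j show "conorm v i j * s i j = - (conorm v j i * s j i)"
      using antisymD[OF assms, of i j] p_sym[of i j] by simp
  qed
  thus ?thesis by (simp add: Tv_def sum_divide_distrib[symmetric])
qed

lemma Xp_v: assumes "antisym_s s" "k \<in> {0..3}" shows "Xp s \<bullet> v k = Tv s k"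
proof -
  have *: "Xp s \<bullet> v 1 = Tv s 1 \<and> Xp s \<bullet> v 2 = Tv s 2 \<and> Xp s \<bullet> v 3 = Tv s 3"
    unfolding Xp_def by (rule someI_ex, rule exists_pt)
  have "Xp s \<bullet> v 0 = Tv s 0" using * sumT[OF assms(1)] by (simp add: v0 sum4 inner_add_right inner_diff_right)
  moreover have "k = 0 \<or> k = 1 \<or> k = 2 \<or> k = 3" using assms(2) by auto
  ultimately show ?thesis using * by auto
qed

lemma Xp_lin:
  assumes "antisym_s s"
  shows "(\<Sum>k\<in>{0..3}. n k * (Xp s \<bullet> v k)) = (\<Sum>k\<in>{0..3}. \<Sum>j\<in>{0..3}. conorm v k j * s k j * (n k - n j)) / 4"
proof -
  have "(\<Sum>k\<in>{0..3}. n k * (Xp s \<bullet> v k)) = (\<Sum>k\<in>{0..3}. n k * (\<Sum>j\<in>{0..3}. conorm v k j * s k j)) / 2"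
    by (simp add: Xp_v[OF assms] Tv_def sum_divide_distrib[symmetric])
  also have "\<dots> = (\<Sum>k\<in>{0..3}. \<Sum>j\<in>{0..3}. conorm v k j * s k j * (n k - n j)) / 4"
    using antisym_sum[where p="conorm v" and s=s and A="{0..3}" and n=n, OF p_sym antisymD[OF assms]] by simp
  finally show ?thesis .
qed

end

context obase begin

lemma Xp_cond:
  assumes as: "antisym_s s" and bd: "bnd_s s"
  shows "cond (Xp s)"
  unfolding cond_def
proof (intro allI impI)
  fix S :: "nat set" assume "S \<subseteq> {0..3}"
  have "(\<Sum>k\<in>{0..3}. ind S k * (Xp s \<bullet> v k)) = (\<Sum>k\<in>{0..3}. \<Sum>j\<in>{0..3}. conorm v k j * s k j * (ind S k - ind S j)) / 4"
    by (rule Xp_lin[OF as])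
  also have "\<dots> \<le> (\<Sum>k\<in>{0..3}. \<Sum>j\<in>{0..3}. conorm v k j * (ind S k - ind S j)^2) / 4"
  proof -
    have "conorm v k j * s k j * (ind S k - ind S j) \<le> conorm v k j * (ind S k - ind S j)^2"
      if "k \<in> {0..3}" "j \<in> {0..3}" for k j
    proof (cases "k = j")
      case False
      have "s k j * (ind S k - ind S j) \<le> (ind S k - ind S j)^2"
        using bd[unfolded bnd_s_def, rule_format, of k j] by (auto simp: ind_def abs_le_iff)
      thus ?thesis using p_nonneg[OF that False] by (simp add: mult.assoc mult_left_mono)
    qed simp
    thus ?thesis by (intro divide_right_mono sum_mono) auto
  qed
  also have "\<dots> = cutv v S / 2" by (simp add: cutv_def)
  finally show "(\<Sum>k\<in>{0..3}. ind S k * (Xp s \<bullet> v k)) \<le> cutv v S / 2" .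
qed

lemma Xp_vor: "antisym_s s \<Longrightarrow> bnd_s s \<Longrightarrow> Xp s \<in> voronoi_domain L"
  using Xp_cond cond_vor by blast

end

context sbase begin

lemma span_repr: "\<exists>n. a = (\<Sum>k\<in>{0..3}. n k *\<^sub>R v k)"
proof -
  have "a \<in> span {v 1, v 2, v 3}" using span_UNIV by simp
  then obtain c1 where "a - c1 *\<^sub>R v 1 \<in> span {v 2, v 3}" by (auto simp: span_insert)
  then obtain c2 where "a - c1 *\<^sub>R v 1 - c2 *\<^sub>R v 2 \<in> span {v 3}" by (auto simp: span_insert)
  then obtain c3 where c3: "a - c1 *\<^sub>R v 1 - c2 *\<^sub>R v 2 = c3 *\<^sub>R v 3" by (auto simp: span_singleton)
  define n :: "nat \<Rightarrow> real" where "n k = (if k = 1 then c1 else if k = 2 then c2 else if k = 3 then c3 else 0)" for k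
  have "a = (\<Sum>k\<in>{0..3}. n k *\<^sub>R v k)" using c3 by (simp add: sum4 n_def algebra_simps)
  thus ?thesis by blast
qed

lemma inner_sumv': "(\<Sum>k\<in>{0..3}. n k *\<^sub>R v k) \<bullet> x = (\<Sum>k\<in>{0..3}. n k * (x \<bullet> v k))"
  by (subst inner_commute) (rule inner_sumv)

end

context obase begin

lemma vor_polyhedron: "polyhedron (voronoi_domain L)"
proof -
  have "voronoi_domain L = \<Inter> ((\<lambda>S. {x. (\<Sum>k\<in>{0..3}. ind S k *\<^sub>R v k) \<bullet> x \<le> cutv v S / 2}) ` Pow {0..3})"
    by (auto simp: vor_eq_cond cond_def inner_sumv')
  also have "polyhedron \<dots>"
  proof (rule polyhedron_Inter)
    fix T assume "T \<in> (\<lambda>S. {x. (\<Sum>k\<in>{0..3}. ind S k *\<^sub>R v k) \<bullet> x \<le> cutv v S / 2}) ` Pow {0..3}"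
    then obtain S where "T = {x. (\<Sum>k\<in>{0..3}. ind S k *\<^sub>R v k) \<bullet> x \<le> cutv v S / 2}" by blast
    thus "polyhedron T" by (simp only: polyhedron_halfspace_le)
  qed simp
  finally show ?thesis .
qed

definition Ep :: "(nat \<times> nat) set" where
  "Ep = {(i, j). i < j \<and> j < 4 \<and> conorm v i j \<noteq> 0}"

definition s_of :: "(nat \<times> nat \<Rightarrow> real) \<Rightarrow> nat \<Rightarrow> nat \<Rightarrow> real" where
  "s_of e i j = (if (i, j) \<in> Ep then e (i, j) else if (j, i) \<in> Ep then - e (j, i) else 0)"

definition Xe :: "(nat \<times> nat \<Rightarrow> real) \<Rightarrow> vec3" where
  "Xe e = Xp (s_of e)"

lemma finite_Ep: "finite Ep"
proof -
  have "Ep \<subseteq> {..<4} \<times> {..<4}" by (auto simp: Ep_def)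
  thus ?thesis by (rule finite_subset) auto
qed

lemma antisym_sgn: "antisym_s (\<lambda>i j. sgn (n i - n j :: real))"
  unfolding antisym_s_def by (simp add: sgn_minus[symmetric])

lemma bnd_sgn: "bnd_s (\<lambda>i j. sgn (n i - n j :: real))"
  unfolding bnd_s_def by (simp add: abs_sgn_eq)

lemma sgn_times_self: "sgn (d::real) * d = \<bar>d\<bar>"
  by (cases "d < 0") (auto simp: sgn_real_def)

lemma Xp_lin_sgn:
  "(\<Sum>k\<in>{0..3}. n k * (Xp (\<lambda>i j. sgn (n i - n j)) \<bullet> v k)) = (\<Sum>k\<in>{0..3}. \<Sum>j\<in>{0..3}. conorm v k j * \<bar>n k - n j\<bar>) / 4"
  by (simp add: Xp_lin[OF antisym_sgn] mult.assoc sgn_times_self)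

lemma Tv_cong:
  assumes "\<And>k j. k \<in> {0..3} \<Longrightarrow> j \<in> {0..3} \<Longrightarrow> conorm v k j * s k j = conorm v k j * s' k j"
  shows "Xp s = Xp s'"
proof -
  have "Tv s k = Tv s' k" if "k \<in> {0..3}" for k
    unfolding Tv_def using assms that by (intro arg_cong[where f="\<lambda>x. x / 2"] sum.cong) auto
  thus ?thesis unfolding Xp_def by simp
qed

lemma ext_sub:
  assumes x: "x extreme_point_of (voronoi_domain L)"
  shows "x \<in> Xe ` (PiE Ep (\<lambda>_. {-1, 1}))"
proof -
  have "{x} face_of voronoi_domain L" using x by (simp add: face_of_singleton)
  hence "{x} exposed_face_of voronoi_domain L" using exposed_face_of_polyhedron[OF vor_polyhedron] by simp
  then obtain a b where sub: "voronoi_domain L \<subseteq> {y. a \<bullet> y \<le> b}" and eq: "{x} = voronoi_domain L \<inter> {y. a \<bullet> y = b}"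
    unfolding exposed_face_of_def by blast
  obtain n where a: "a = (\<Sum>k\<in>{0..3}. n k *\<^sub>R v k)" using span_repr by blast
  have xV: "x \<in> voronoi_domain L" and ax: "a \<bullet> x = b" using eq by auto
  define s0 where "s0 = (\<lambda>i j. sgn (n i - n j))"
  have as0: "antisym_s s0" unfolding s0_def by (rule antisym_sgn)
  define z where "z = Xp s0"
  have zV: "z \<in> voronoi_domain L" unfolding z_def s0_def by (rule Xp_vor[OF antisym_sgn bnd_sgn])
  have az: "a \<bullet> z = (\<Sum>k\<in>{0..3}. \<Sum>j\<in>{0..3}. conorm v k j * \<bar>n k - n j\<bar>) / 4"
    unfolding a inner_sumv' z_def s0_def by (rule Xp_lin_sgn)
  have "a \<bullet> x \<le> a \<bullet> z" unfolding az unfolding a inner_sumv' by (rule lov_x[OF vor_cond[OF xV]])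
  moreover have "a \<bullet> z \<le> b" using sub zV by auto
  ultimately have azb: "a \<bullet> z = b" using ax by simp
  hence zx: "z = x" using eq zV by auto
  have neq: "n i \<noteq> n j" if ij: "(i, j) \<in> Ep" for i j
  proof
    assume nij: "n i = n j"
    from ij have ij': "i < j" "j < 4" "conorm v i j \<noteq> 0" by (auto simp: Ep_def)
    hence pos: "conorm v i j > 0" using p_nonneg[of i j] by force
    define s1 where "s1 = (\<lambda>k l. if k = i \<and> l = j then 1 else if k = j \<and> l = i then -1 else s0 k l)"
    have as1: "antisym_s s1" using ij' unfolding s1_def s0_def antisym_s_def by (auto simp: sgn_minus[symmetric])
    have bd1: "bnd_s s1" unfolding s1_def s0_def bnd_s_def by (auto simp: abs_sgn_eq)
    have z1V: "Xp s1 \<in> voronoi_domain L" by (rule Xp_vor[OF as1 bd1])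
    have "a \<bullet> Xp s1 = (\<Sum>k\<in>{0..3}. \<Sum>l\<in>{0..3}. conorm v k l * s1 k l * (n k - n l)) / 4"
      unfolding a inner_sumv' by (rule Xp_lin[OF as1])
    also have "\<dots> = (\<Sum>k\<in>{0..3}. \<Sum>l\<in>{0..3}. conorm v k l * s0 k l * (n k - n l)) / 4"
      using nij by (intro arg_cong[where f="\<lambda>x. x / 4"] sum.cong refl) (auto simp: s1_def)
    also have "\<dots> = a \<bullet> z" unfolding a inner_sumv' z_def by (rule Xp_lin[OF as0, symmetric])
    finally have "Xp s1 = x" using azb eq z1V by auto
    hence "Xp s1 \<bullet> v i = z \<bullet> v i" using zx by simp
    hence "Tv s1 i = Tv s0 i" using ij' Xp_v[OF as1, of i] Xp_v[OF antisym_sgn, of i n] by (simp add: z_def s0_def)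
    moreover have "Tv s1 i = Tv s0 i + conorm v i j / 2"
    proof -
      have "(\<Sum>l\<in>{0..3}. conorm v i l * s1 i l) = (\<Sum>l\<in>{0..3}. conorm v i l * s0 i l + (if l = j then conorm v i j else 0))"
        using ij' nij by (intro sum.cong refl) (auto simp: s1_def s0_def)
      also have "\<dots> = (\<Sum>l\<in>{0..3}. conorm v i l * s0 i l) + conorm v i j"
        using ij' by (simp add: sum.distrib)
      finally show ?thesis by (simp add: Tv_def add_divide_distrib)
    qed
    ultimately show False using pos by simp
  qed
  define e where "e = restrict (\<lambda>(i, j). sgn (n i - n j)) Ep"
  have eP: "e \<in> PiE Ep (\<lambda>_. {-1, 1})"
    unfolding e_def using neq by (auto simp: PiE_iff sgn_real_def)
  have "Xe e = z" unfolding Xe_def z_def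
  proof (rule Tv_cong)
    fix k j :: nat assume kj: "k \<in> {0..3}" "j \<in> {0..3}"
    show "conorm v k j * s_of e k j = conorm v k j * s0 k j"
    proof (cases "(k, j) \<in> Ep")
      case True thus ?thesis by (simp add: s_of_def e_def s0_def)
    next
      case F1: False
      show ?thesis
      proof (cases "(j, k) \<in> Ep")
        case True
        thus ?thesis using F1 by (simp add: s_of_def e_def s0_def sgn_minus[symmetric])
      next
        case False
        have "conorm v k j = 0 \<or> k = j" using F1 False kj p_sym[of k j]
          by (cases "k < j") (auto simp: Ep_def)
        thus ?thesis using F1 False by (auto simp: s_of_def s0_def)
      qed
    qed
  qed
  thus ?thesis using zx eP by blast
qed

lemma finite_XeP: "finite (Xe ` (PiE Ep (\<lambda>_. {-1, 1::real})))"
  by (intro finite_imageI finite_PiE finite_Ep) auto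

lemma finite_ext: "finite {x. x extreme_point_of (voronoi_domain L)}"
  by (rule finite_subset[OF _ finite_XeP]) (use ext_sub in auto)

lemma card_ext_le: "card {x. x extreme_point_of (voronoi_domain L)} \<le> 2 ^ card Ep"
proof -
  have "card {x. x extreme_point_of (voronoi_domain L)} \<le> card (Xe ` (PiE Ep (\<lambda>_. {-1, 1::real})))"
    by (rule card_mono[OF finite_XeP]) (use ext_sub in auto)
  also have "\<dots> \<le> card (PiE Ep (\<lambda>_. {-1, 1::real}))" by (rule card_image_le) (intro finite_PiE finite_Ep; simp)
  also have "\<dots> = 2 ^ card Ep" using finite_Ep by (simp add: card_PiE numeral_2_eq_2)
  finally show ?thesis .
qed

end

lemma lovasz_eq:
  fixes p :: "nat \<Rightarrow> nat \<Rightarrow> real" and t n :: "nat \<Rightarrow> real"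
  assumes sym: "\<And>i j. p i j = p j i" and ts: "(\<Sum>k\<in>{0..3}. t k) = 0"
   and cuts: "\<And>S. S \<subseteq> {0..3} \<Longrightarrow> (\<Sum>k\<in>{0..3}. ind S k * t k) \<le> cutp p S / 2"
   and sp: "\<sigma> permutes {0..3}" and o: "n (\<sigma> 0) > n (\<sigma> 1)" "n (\<sigma> 1) > n (\<sigma> 2)" "n (\<sigma> 2) > n (\<sigma> 3)"
   and ge: "(\<Sum>k\<in>{0..3}. n k * t k) \<ge> (\<Sum>i\<in>{0..3}. \<Sum>j\<in>{0..3}. p i j * \<bar>n i - n j\<bar>) / 4"
  shows "t (\<sigma> 0) = (p (\<sigma> 0) (\<sigma> 1) + p (\<sigma> 0) (\<sigma> 2) + p (\<sigma> 0) (\<sigma> 3))/2 \<and>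
         t (\<sigma> 0) + t (\<sigma> 1) = (p (\<sigma> 0) (\<sigma> 2) + p (\<sigma> 0) (\<sigma> 3) + p (\<sigma> 1) (\<sigma> 2) + p (\<sigma> 1) (\<sigma> 3))/2 \<and>
         t (\<sigma> 0) + t (\<sigma> 1) + t (\<sigma> 2) = (p (\<sigma> 0) (\<sigma> 3) + p (\<sigma> 1) (\<sigma> 3) + p (\<sigma> 2) (\<sigma> 3))/2"
proof -
  have img: "\<sigma> ` A \<subseteq> {0..3}" if "A \<subseteq> {0..3}" for A
    using permutes_image[OF sp] that by auto
  note ps = perm_sum4[OF sp] ind_perm[OF sp] permutes_inj[OF sp, THEN inj_eq]
  have c1: "(\<Sum>k\<in>{0..3}. ind (\<sigma>`{0}) k * t k) \<le> cutp p (\<sigma>`{0}) / 2" by (rule cuts, rule img) auto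
  have c2: "(\<Sum>k\<in>{0..3}. ind (\<sigma>`{0,1}) k * t k) \<le> cutp p (\<sigma>`{0,1}) / 2" by (rule cuts, rule img) auto
  have c3: "(\<Sum>k\<in>{0..3}. ind (\<sigma>`{0,1,2}) k * t k) \<le> cutp p (\<sigma>`{0,1,2}) / 2" by (rule cuts, rule img) auto
  have r: "(\<Sum>i\<in>{0..3}. \<Sum>j\<in>{0..3}. p i j * \<bar>n i - n j\<bar>) / 4 =
     (p (\<sigma> 0) (\<sigma> 1) * \<bar>n (\<sigma> 0) - n (\<sigma> 1)\<bar> + p (\<sigma> 0) (\<sigma> 2) * \<bar>n (\<sigma> 0) - n (\<sigma> 2)\<bar> + p (\<sigma> 0) (\<sigma> 3) * \<bar>n (\<sigma> 0) - n (\<sigma> 3)\<bar>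
       + p (\<sigma> 1) (\<sigma> 2) * \<bar>n (\<sigma> 1) - n (\<sigma> 2)\<bar> + p (\<sigma> 1) (\<sigma> 3) * \<bar>n (\<sigma> 1) - n (\<sigma> 3)\<bar> + p (\<sigma> 2) (\<sigma> 3) * \<bar>n (\<sigma> 2) - n (\<sigma> 3)\<bar>)/2"
    by (simp add: ps sym abs_minus_commute)
  show ?thesis
    apply (rule lov_core_eq[OF o])
    using ts c1 c2 c3 ge[unfolded r] by (simp_all add: ps cutp_def ind_def sym)
qed

lemma mono_perm4_id:
  assumes pp: "\<pi> permutes {0..3::nat}" and m: "\<And>r r'. r \<in> {0..3} \<Longrightarrow> r' \<in> {0..3} \<Longrightarrow> r < r' \<Longrightarrow> \<pi> r < \<pi> r'"
  shows "r \<in> {0..3} \<Longrightarrow> \<pi> r = r"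
proof -
  have "\<pi> 3 \<in> {0..3}" using permutes_in_image[OF pp] by simp
  moreover have "\<pi> 0 < \<pi> 1" "\<pi> 1 < \<pi> 2" "\<pi> 2 < \<pi> 3" using m by auto
  ultimately have "\<pi> 0 = 0" "\<pi> 1 = 1" "\<pi> 2 = 2" "\<pi> 3 = 3" by auto
  moreover assume "r \<in> {0..3}"
  hence "r = 0 \<or> r = 1 \<or> r = 2 \<or> r = 3" by auto
  ultimately show ?thesis by auto
qed

lemma perm_order_diff:
  assumes rp: "\<rho> permutes {0..3::nat}" and rp': "\<rho>' permutes {0..3}" and ne: "\<rho> \<noteq> \<rho>'"
  shows "\<exists>k\<in>{0..3}. \<exists>j\<in>{0..3}. \<rho> k < \<rho> j \<and> \<rho>' j < \<rho>' k"
proof (rule ccontr)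
  assume "\<not> ?thesis"
  hence H: "\<And>k j. k \<in> {0..3} \<Longrightarrow> j \<in> {0..3} \<Longrightarrow> \<rho> k < \<rho> j \<Longrightarrow> \<rho>' k \<le> \<rho>' j"
    by (meson not_le)
  define \<pi> where "\<pi> = \<rho>' \<circ> inv \<rho>"
  have ip: "inv \<rho> permutes {0..3}" by (rule permutes_inv[OF rp])
  have pp: "\<pi> permutes {0..3}" unfolding \<pi>_def by (rule permutes_compose[OF ip rp'])
  have m: "\<pi> r < \<pi> r'" if "r \<in> {0..3}" "r' \<in> {0..3}" "r < r'" for r r'
  proof -
    have a: "inv \<rho> r \<in> {0..3}" "inv \<rho> r' \<in> {0..3}" using permutes_in_image[OF ip] that by auto
    have b: "\<rho> (inv \<rho> r) = r" "\<rho> (inv \<rho> r') = r'" using permutes_inverses(1)[OF rp] by auto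
    have "\<rho>' (inv \<rho> r) \<le> \<rho>' (inv \<rho> r')" using H[OF a] b that by simp
    moreover have "inv \<rho> r \<noteq> inv \<rho> r'"
    proof
      assume "inv \<rho> r = inv \<rho> r'"
      hence "\<rho> (inv \<rho> r) = \<rho> (inv \<rho> r')" by simp
      thus False using b that by simp
    qed
    hence "\<rho>' (inv \<rho> r) \<noteq> \<rho>' (inv \<rho> r')" using permutes_inj[OF rp'] by (simp add: inj_eq)
    ultimately show ?thesis by (simp add: \<pi>_def)
  qed
  have "\<rho>' k = \<rho> k" for k
  proof (cases "k \<in> {0..3}")
    case True
    hence "\<rho> k \<in> {0..3}" using permutes_in_image[OF rp] by simp
    hence "\<pi> (\<rho> k) = \<rho> k" using mono_perm4_id[OF pp m] by blast
    thus ?thesis using permutes_inverses(2)[OF rp] by (simp add: \<pi>_def)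
  next
    case False thus ?thesis using rp rp' by (simp add: permutes_not_in)
  qed
  thus False using ne by auto
qed

lemma sgn_times_le: "sgn (x::real) * d \<le> \<bar>d\<bar>"
  by (cases x rule: linorder_cases) (auto simp: sgn_real_def)

lemma double_sum_strict:
  fixes f g :: "nat \<Rightarrow> nat \<Rightarrow> real"
  assumes le: "\<And>i j. i \<in> A \<Longrightarrow> j \<in> A \<Longrightarrow> f i j \<le> g i j" and fin: "finite A"
    and k: "k \<in> A" "j \<in> A" and lt: "f k j < g k j"
  shows "(\<Sum>i\<in>A. \<Sum>j\<in>A. f i j) < (\<Sum>i\<in>A. \<Sum>j\<in>A. g i j)"
proof (rule sum_strict_mono_ex1[OF fin])
  show "\<forall>i\<in>A. (\<Sum>j\<in>A. f i j) \<le> (\<Sum>j\<in>A. g i j)" using le by (simp add: sum_mono)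
  show "\<exists>i\<in>A. (\<Sum>j\<in>A. f i j) < (\<Sum>j\<in>A. g i j)"
  proof (rule bexI[OF _ k(1)], rule sum_strict_mono_ex1[OF fin])
    show "\<forall>x\<in>A. f k x \<le> g k x" using le k by auto
    show "\<exists>x\<in>A. f k x < g k x" using k lt by auto
  qed
qed

context obase begin

definition nr :: "(nat \<Rightarrow> nat) \<Rightarrow> nat \<Rightarrow> real" where "nr \<rho> k = - real (\<rho> k)"

definition Pr :: "(nat \<Rightarrow> nat) \<Rightarrow> vec3" where "Pr \<rho> = Xp (\<lambda>i j. sgn (nr \<rho> i - nr \<rho> j))"

definition Mr :: "(nat \<Rightarrow> nat) \<Rightarrow> real" where
  "Mr \<rho> = (\<Sum>i\<in>{0..3}. \<Sum>j\<in>{0..3}. conorm v i j * \<bar>nr \<rho> i - nr \<rho> j\<bar>) / 4"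

lemma Pr_vor: "Pr \<rho> \<in> voronoi_domain L"
  unfolding Pr_def by (rule Xp_vor[OF antisym_sgn bnd_sgn])

lemma Pr_val: "(\<Sum>k\<in>{0..3}. nr \<rho> k * (Pr \<rho> \<bullet> v k)) = Mr \<rho>"
  unfolding Pr_def Mr_def by (rule Xp_lin_sgn)

lemma le_Mr: "y \<in> voronoi_domain L \<Longrightarrow> (\<Sum>k\<in>{0..3}. nr \<rho> k * (y \<bullet> v k)) \<le> Mr \<rho>"
  unfolding Mr_def by (rule lov_x[OF vor_cond])

lemma uniq_max:
  assumes rp: "\<rho> permutes {0..3}" and y: "y \<in> voronoi_domain L" and ge: "(\<Sum>k\<in>{0..3}. nr \<rho> k * (y \<bullet> v k)) \<ge> Mr \<rho>"
  shows "y = Pr \<rho>"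
proof -
  define \<sigma> where "\<sigma> = inv \<rho>"
  have sp: "\<sigma> permutes {0..3}" unfolding \<sigma>_def by (rule permutes_inv[OF rp])
  have rs: "\<rho> (\<sigma> r) = r" for r unfolding \<sigma>_def using permutes_inverses(1)[OF rp] by simp
  have o: "nr \<rho> (\<sigma> 0) > nr \<rho> (\<sigma> 1)" "nr \<rho> (\<sigma> 1) > nr \<rho> (\<sigma> 2)" "nr \<rho> (\<sigma> 2) > nr \<rho> (\<sigma> 3)"
    by (simp_all add: nr_def rs)
  have cy: "\<And>S. S \<subseteq> {0..3} \<Longrightarrow> (\<Sum>k\<in>{0..3}. ind S k * (y \<bullet> v k)) \<le> cutp (conorm v) S / 2"
    using vor_cond[OF y] by (simp add: cond_def cutv_cutp)
  have cP: "\<And>S. S \<subseteq> {0..3} \<Longrightarrow> (\<Sum>k\<in>{0..3}. ind S k * (Pr \<rho> \<bullet> v k)) \<le> cutp (conorm v) S / 2"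
    using vor_cond[OF Pr_vor] by (simp add: cond_def cutv_cutp)
  note ey = lovasz_eq[OF p_sym sum_tv cy sp o ge[unfolded Mr_def]]
  have geP: "(\<Sum>i\<in>{0..3}. \<Sum>j\<in>{0..3}. conorm v i j * \<bar>nr \<rho> i - nr \<rho> j\<bar>) / 4 \<le> (\<Sum>k\<in>{0..3}. nr \<rho> k * (Pr \<rho> \<bullet> v k))"
    using Pr_val by (simp add: Mr_def)
  note eP = lovasz_eq[OF p_sym sum_tv cP sp o geP]
  have s1: "(\<Sum>k\<in>{0..3}. y \<bullet> v k) = 0" "(\<Sum>k\<in>{0..3}. Pr \<rho> \<bullet> v k) = 0" by (rule sum_tv)+
  have all: "y \<bullet> v (\<sigma> r) = Pr \<rho> \<bullet> v (\<sigma> r)" if "r \<in> {0..3}" for r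
  proof -
    have "r = 0 \<or> r = 1 \<or> r = 2 \<or> r = 3" using that by auto
    moreover note ey eP s1[unfolded perm_sum4[OF sp]]
    ultimately show ?thesis by auto
  qed
  have k: "y \<bullet> v k = Pr \<rho> \<bullet> v k" if "k \<in> {0..3}" for k
  proof -
    have "\<sigma> (\<rho> k) = k" unfolding \<sigma>_def using permutes_inverses(2)[OF rp] by simp
    moreover have "\<rho> k \<in> {0..3}" using permutes_in_image[OF rp] that by simp
    ultimately show ?thesis using all by metis
  qed
  show ?thesis by (rule ext_eq) (auto intro: k)
qed

lemma Pr_extreme:
  assumes rp: "\<rho> permutes {0..3}"
  shows "Pr \<rho> extreme_point_of voronoi_domain L"
  unfolding extreme_point_of_def
proof (intro conjI ballI Pr_vor notI)
  fix a b assume a: "a \<in> voronoi_domain L" and b: "b \<in> voronoi_domain L" and ab: "Pr \<rho> \<in> open_segment a b"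
  define w where "w = (\<Sum>k\<in>{0..3}. nr \<rho> k *\<^sub>R v k)"
  have wx: "w \<bullet> x = (\<Sum>k\<in>{0..3}. nr \<rho> k * (x \<bullet> v k))" for x unfolding w_def by (rule inner_sumv')
  from ab obtain u where u: "0 < u" "u < 1" and P: "Pr \<rho> = (1 - u) *\<^sub>R a + u *\<^sub>R b" and "a \<noteq> b"
    by (auto simp: in_segment)
  have "w \<bullet> a \<le> Mr \<rho>" "w \<bullet> b \<le> Mr \<rho>" using le_Mr a b by (simp_all add: wx)
  moreover have "w \<bullet> Pr \<rho> = Mr \<rho>" using Pr_val by (simp add: wx)
  moreover have "w \<bullet> Pr \<rho> = (1 - u) * (w \<bullet> a) + u * (w \<bullet> b)" by (simp add: P inner_add_right)
  ultimately have "w \<bullet> a = Mr \<rho> \<and> w \<bullet> b = Mr \<rho>"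
  proof -
    assume h: "w \<bullet> a \<le> Mr \<rho>" "w \<bullet> b \<le> Mr \<rho>" "w \<bullet> Pr \<rho> = Mr \<rho>" "w \<bullet> Pr \<rho> = (1 - u) * (w \<bullet> a) + u * (w \<bullet> b)"
    have "(1 - u) * (w \<bullet> a) \<le> (1 - u) * Mr \<rho>" using h u by (intro mult_left_mono) auto
    moreover have "u * (w \<bullet> b) \<le> u * Mr \<rho>" using h u by (intro mult_left_mono) auto
    moreover have "(1 - u) * (w \<bullet> a) < (1 - u) * Mr \<rho>" if "w \<bullet> a < Mr \<rho>" using that u by simp
    moreover have "u * (w \<bullet> b) < u * Mr \<rho>" if "w \<bullet> b < Mr \<rho>" using that u by simp
    moreover have "(1 - u) * Mr \<rho> + u * Mr \<rho> = Mr \<rho>" by (simp add: algebra_simps)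
    ultimately show ?thesis using h by (cases "w \<bullet> a < Mr \<rho>"; cases "w \<bullet> b < Mr \<rho>") linarith+
  qed
  hence "a = Pr \<rho>" "b = Pr \<rho>" using uniq_max[OF rp a] uniq_max[OF rp b] by (simp_all add: wx)
  thus False using \<open>a \<noteq> b\<close> by simp
qed

lemma Pr_inj:
  assumes pos: "\<And>i j. i \<in> {0..3} \<Longrightarrow> j \<in> {0..3} \<Longrightarrow> i \<noteq> j \<Longrightarrow> conorm v i j > 0"
    and rp: "\<rho> permutes {0..3}" and rp': "\<rho>' permutes {0..3}" and eq: "Pr \<rho> = Pr \<rho>'"
  shows "\<rho> = \<rho>'"
proof (rule ccontr)
  assume ne: "\<rho> \<noteq> \<rho>'"
  obtain k j where kj: "k \<in> {0..3}" "j \<in> {0..3}" "\<rho> k < \<rho> j" "\<rho>' j < \<rho>' k"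
    using perm_order_diff[OF rp rp' ne] by blast
  define s' where "s' = (\<lambda>i j. sgn (nr \<rho>' i - nr \<rho>' j))"
  have "(\<Sum>k\<in>{0..3}. nr \<rho> k * (Pr \<rho>' \<bullet> v k)) = (\<Sum>i\<in>{0..3}. \<Sum>j\<in>{0..3}. conorm v i j * s' i j * (nr \<rho> i - nr \<rho> j)) / 4"
    unfolding Pr_def s'_def by (rule Xp_lin[OF antisym_sgn])
  also have "\<dots> < Mr \<rho>" unfolding Mr_def
  proof (intro divide_strict_right_mono double_sum_strict)
    fix i j :: nat assume ij: "i \<in> {0..3}" "j \<in> {0..3}"
    show "conorm v i j * s' i j * (nr \<rho> i - nr \<rho> j) \<le> conorm v i j * \<bar>nr \<rho> i - nr \<rho> j\<bar>"
    proof (cases "i = j")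
      case False
      have "s' i j * (nr \<rho> i - nr \<rho> j) \<le> \<bar>nr \<rho> i - nr \<rho> j\<bar>"
        unfolding s'_def by (rule sgn_times_le)
      thus ?thesis using p_nonneg[OF ij False] by (simp add: mult.assoc mult_left_mono)
    qed simp
  next
    have "k \<noteq> j" using kj by auto
    hence p: "conorm v k j > 0" using pos kj by auto
    have "s' k j = -1" using kj by (simp add: s'_def nr_def)
    moreover have "nr \<rho> k - nr \<rho> j > 0" using kj by (simp add: nr_def)
    ultimately show "conorm v k j * s' k j * (nr \<rho> k - nr \<rho> j) < conorm v k j * \<bar>nr \<rho> k - nr \<rho> j\<bar>"
      using p by (simp add: mult_pos_pos)
  qed (use kj in auto)
  finally show False using Pr_val[of \<rho>] eq by simp
qed

lemma card_ext_ge: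
  assumes pos: "\<And>i j. i \<in> {0..3} \<Longrightarrow> j \<in> {0..3} \<Longrightarrow> i \<noteq> j \<Longrightarrow> conorm v i j > 0"
  shows "card {x. x extreme_point_of (voronoi_domain L)} \<ge> 24"
proof -
  have "card (Pr ` {\<rho>. \<rho> permutes {0..3::nat}}) = card {\<rho>. \<rho> permutes {0..3::nat}}"
    by (rule card_image, rule inj_onI) (use Pr_inj[OF pos] in auto)
  also have "\<dots> = 24" using card_permutations[of "{0..3::nat}" 4] by (simp add: eval_nat_numeral)
  finally have c: "card (Pr ` {\<rho>. \<rho> permutes {0..3::nat}}) = 24" .
  have "card (Pr ` {\<rho>. \<rho> permutes {0..3::nat}}) \<le> card {x. x extreme_point_of (voronoi_domain L)}"
    by (rule card_mono[OF finite_ext]) (use Pr_extreme in auto)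
  thus ?thesis using c by simp
qed

end

definition atoms :: "vec3 set \<Rightarrow> vec3 set set" where
  "atoms P = {F. F face_of P \<and> F \<noteq> {} \<and> (\<forall>G. G face_of P \<and> G \<subseteq> F \<longrightarrow> G = {} \<or> G = F)}"

lemma atoms_eq:
  assumes "compact P" "convex P"
  shows "atoms P = (\<lambda>x. {x}) ` {x. x extreme_point_of P}"
proof
  show "(\<lambda>x. {x}) ` {x. x extreme_point_of P} \<subseteq> atoms P"
    by (auto simp: atoms_def face_of_singleton subset_singleton_iff)
  show "atoms P \<subseteq> (\<lambda>x. {x}) ` {x. x extreme_point_of P}"
  proof
    fix F assume "F \<in> atoms P"
    hence F: "F face_of P" "F \<noteq> {}" and at: "\<And>G. G face_of P \<Longrightarrow> G \<subseteq> F \<Longrightarrow> G = {} \<or> G = F"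
      by (auto simp: atoms_def)
    have "closed F" using face_of_imp_closed[OF assms(2) compact_imp_closed[OF assms(1)] F(1)] .
    moreover have "bounded F" using face_of_imp_subset[OF F(1)] compact_imp_bounded[OF assms(1)] bounded_subset by blast
    ultimately have cF: "compact F" by (simp add: compact_eq_bounded_closed)
    obtain x where x: "x extreme_point_of F"
      using extreme_point_exists_convex[OF cF face_of_imp_convex[OF F(1)] F(2)] by blast
    have "{x} face_of P" using face_of_trans[OF x[folded face_of_singleton] F(1)] .
    moreover have "{x} \<subseteq> F" using x by (simp add: extreme_point_of_def)
    ultimately have "{x} = F" using at by blast
    moreover have "x extreme_point_of P" using \<open>{x} face_of P\<close> by (simp add: face_of_singleton)
    ultimately show "F \<in> (\<lambda>x. {x}) ` {x. x extreme_point_of P}" by blast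
  qed
qed

lemma card_atoms:
  assumes "compact P" "convex P"
  shows "card (atoms P) = card {x. x extreme_point_of P}"
  unfolding atoms_eq[OF assms] by (rule card_image) (simp add: inj_on_def)

lemma comb_equiv_atoms:
  assumes "comb_equiv P Q"
  shows "card (atoms P) = card (atoms Q)"
proof -
  obtain \<phi> where bij: "bij_betw \<phi> {F. F face_of P} {G. G face_of Q}"
    and ord: "\<And>F1 F2. F1 face_of P \<Longrightarrow> F2 face_of P \<Longrightarrow> (F1 \<subseteq> F2 \<longleftrightarrow> \<phi> F1 \<subseteq> \<phi> F2)"
    using assms unfolding comb_equiv_def by blast
  have img: "\<phi> F face_of Q" if "F face_of P" for F using bij that by (auto simp: bij_betw_def)
  have surj: "\<exists>F. F face_of P \<and> G = \<phi> F" if "G face_of Q" for G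
    using bij that unfolding bij_betw_def by auto
  have inj: "F1 = F2" if "F1 face_of P" "F2 face_of P" "\<phi> F1 = \<phi> F2" for F1 F2
    using bij that unfolding bij_betw_def inj_on_def by auto
  have e: "\<phi> {} = {}"
  proof -
    obtain F where "F face_of P" "{} = \<phi> F" using surj[of "{}"] by auto
    hence "\<phi> {} \<subseteq> \<phi> F" using ord[of "{}" F] by auto
    thus ?thesis using \<open>{} = \<phi> F\<close> by auto
  qed
  have "\<phi> ` atoms P = atoms Q"
  proof
    show "\<phi> ` atoms P \<subseteq> atoms Q"
    proof
      fix G assume "G \<in> \<phi> ` atoms P"
      then obtain F where F: "F \<in> atoms P" and G: "G = \<phi> F" by blast
      from F have Ff: "F face_of P" "F \<noteq> {}" and at: "\<And>H. H face_of P \<Longrightarrow> H \<subseteq> F \<Longrightarrow> H = {} \<or> H = F"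
        by (auto simp: atoms_def)
      have "G face_of Q" using img[OF Ff(1)] G by simp
      moreover have "G \<noteq> {}" using inj[OF Ff(1) empty_face_of] e G Ff(2) by auto
      moreover have "H = {} \<or> H = G" if h: "H face_of Q" "H \<subseteq> G" for H
      proof -
        obtain H' where H': "H' face_of P" "H = \<phi> H'" using surj[OF h(1)] by blast
        hence "H' \<subseteq> F" using ord[OF H'(1) Ff(1)] h G by auto
        hence "H' = {} \<or> H' = F" using at H' by blast
        thus ?thesis using e H' G by auto
      qed
      ultimately show "G \<in> atoms Q" by (auto simp: atoms_def)
    qed
    show "atoms Q \<subseteq> \<phi> ` atoms P"
    proof
      fix G assume "G \<in> atoms Q"
      hence Gf: "G face_of Q" "G \<noteq> {}" and at: "\<And>H. H face_of Q \<Longrightarrow> H \<subseteq> G \<Longrightarrow> H = {} \<or> H = G"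
        by (auto simp: atoms_def)
      obtain F where F: "F face_of P" "G = \<phi> F" using surj[OF Gf(1)] by blast
      have "F \<noteq> {}" using F Gf e by auto
      moreover have "H = {} \<or> H = F" if "H face_of P" "H \<subseteq> F" for H
      proof -
        have "\<phi> H \<subseteq> G" using ord[OF that(1) F(1)] that F by auto
        hence "\<phi> H = {} \<or> \<phi> H = G" using at img[OF that(1)] by blast
        thus ?thesis using inj[OF that(1) empty_face_of] inj[OF that(1) F(1)] e F by auto
      qed
      ultimately have "F \<in> atoms P" using F by (auto simp: atoms_def)
      thus "G \<in> \<phi> ` atoms P" using F by blast
    qed
  qed
  moreover have "inj_on \<phi> (atoms P)" using inj by (auto simp: inj_on_def atoms_def)
  ultimately show ?thesis by (metis card_image)
qed

lemma comb_equiv_ext_card: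
  assumes "comb_equiv P Q" "compact P" "convex P" "compact Q" "convex Q"
  shows "card {x. x extreme_point_of P} = card {x. x extreme_point_of Q}"
  using comb_equiv_atoms[OF assms(1)] card_atoms[OF assms(2,3)] card_atoms[OF assms(4,5)] by simp

lemma sum_ind_single: "k \<in> {0..3} \<Longrightarrow> (\<Sum>j\<in>{0..3::nat}. ind {k} j * f j) = f k"
proof -
  assume k: "k \<in> {0..3}"
  have "(\<Sum>j\<in>{0..3::nat}. ind {k} j * f j) = (\<Sum>j\<in>{0..3::nat}. if j = k then f j else 0)"
    by (rule sum.cong) (auto simp: ind_def)
  also have "\<dots> = f k" using k by (simp add: sum.delta')
  finally show ?thesis .
qed

context obase begin

lemma vor_bound_comp:
  assumes x: "x \<in> voronoi_domain L" and k: "k \<in> {0..3}"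
  shows "\<bar>x \<bullet> v k\<bar> \<le> \<bar>cutv v {k}\<bar> + \<bar>cutv v ({0..3} - {k})\<bar>"
proof -
  have c: "cond x" using vor_cond[OF x] .
  have "(\<Sum>j\<in>{0..3}. ind {k} j * (x \<bullet> v j)) \<le> cutv v {k} / 2" using c k unfolding cond_def by auto
  moreover have "(\<Sum>j\<in>{0..3}. ind {k} j * (x \<bullet> v j)) = x \<bullet> v k"
    using k by (rule sum_ind_single)
  moreover have "(\<Sum>j\<in>{0..3}. ind ({0..3} - {k}) j * (x \<bullet> v j)) \<le> cutv v ({0..3} - {k}) / 2" using c unfolding cond_def by auto
  moreover have "(\<Sum>j\<in>{0..3}. ind ({0..3} - {k}) j * (x \<bullet> v j)) = - (x \<bullet> v k)"
  proof -
    have "(\<Sum>j\<in>{0..3}. ind ({0..3} - {k}) j * (x \<bullet> v j)) = (\<Sum>j\<in>{0..3}. x \<bullet> v j) - (\<Sum>j\<in>{0..3}. ind {k} j * (x \<bullet> v j))"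
      by (simp add: sum_subtractf[symmetric] ind_def algebra_simps) (rule sum.cong, auto)
    thus ?thesis using sum_tv sum_ind_single[OF k, of "\<lambda>j. x \<bullet> v j"] by simp
  qed
  ultimately show ?thesis
    using abs_ge_self[of "cutv v {k}"] abs_ge_self[of "cutv v ({0..3} - {k})"]
      abs_ge_zero[of "cutv v {k}"] abs_ge_zero[of "cutv v ({0..3} - {k})"]
    unfolding abs_le_iff by (intro conjI; linarith)
qed

lemma vor_bounded: "bounded (voronoi_domain L)"
proof -
  define B where "B = (\<Sum>k\<in>{1,2,3}. \<bar>cutv v {k}\<bar> + \<bar>cutv v ({0..3} - {k})\<bar>)"
  have lin: "linear ((*v) Mv)" by (rule matrix_vector_mul_linear)
  have inj: "inj ((*v) Mv)"
  proof (rule injI)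
    fix x y assume "Mv *v x = Mv *v y"
    hence "vector [v 1 \<bullet> x, v 2 \<bullet> x, v 3 \<bullet> x] = (vector [v 1 \<bullet> y, v 2 \<bullet> y, v 3 \<bullet> y] :: real^3)"
      by (simp add: Mv_app)
    hence "x \<bullet> v 1 = y \<bullet> v 1" "x \<bullet> v 2 = y \<bullet> v 2" "x \<bullet> v 3 = y \<bullet> v 3"
      by (simp_all add: vec_eq_iff forall_3 vector_3 inner_commute)
    thus "x = y" by (rule ext_eq)
  qed
  obtain g where g: "linear g" "g \<circ> (*v) Mv = id" using linear_injective_left_inverse[OF lin inj] by blast
  have bM: "bounded ((*v) Mv ` voronoi_domain L)"
    unfolding bounded_iff
  proof (intro exI ballI)
    fix y assume "y \<in> (*v) Mv ` voronoi_domain L"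
    then obtain x where x: "x \<in> voronoi_domain L" and y: "y = Mv *v x" by blast
    have "norm y \<le> (\<Sum>i\<in>UNIV. \<bar>y $ i\<bar>)" by (rule norm_le_l1_cart)
    also have "\<dots> = \<bar>x \<bullet> v 1\<bar> + \<bar>x \<bullet> v 2\<bar> + \<bar>x \<bullet> v 3\<bar>" by (simp add: sum_3 y Mv_app vector_3 inner_commute)
    also have "\<dots> \<le> B" unfolding B_def using vor_bound_comp[OF x, of 1] vor_bound_comp[OF x, of 2] vor_bound_comp[OF x, of 3]
      by simp
    finally show "norm y \<le> B" .
  qed
  have "voronoi_domain L = g ` ((*v) Mv ` voronoi_domain L)" using g(2)
    by (simp add: image_comp)
  moreover have "bounded (g ` ((*v) Mv ` voronoi_domain L))"
    by (rule bounded_linear_image[OF bM]) (simp add: g(1) linear_conv_bounded_linear[symmetric])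
  ultimately show ?thesis by simp
qed

lemma vor_compact: "compact (voronoi_domain L)"
  using vor_bounded polyhedron_imp_closed[OF vor_polyhedron] by (simp add: compact_eq_bounded_closed)

lemma vor_convex: "convex (voronoi_domain L)"
  by (rule polyhedron_imp_convex[OF vor_polyhedron])

end


lemma vec3_inner: "(vector [a, b, c] :: vec3) \<bullet> vector [d, e, f] = a*d + b*e + c*f"
  by (simp add: inner_vec_def sum_3 vector_3)

lemma vec3_eq: "((vector [a, b, c] :: vec3) = vector [d, e, f]) \<longleftrightarrow> a = d \<and> b = e \<and> c = f"
  by (simp add: vec_eq_iff forall_3 vector_3)

definition pts :: "(real \<times> real \<times> real) list" where
  "pts = [(-1,-1,-2), (-1,-1,2), (-1,1,-2), (-1,1,2), (1,-1,-2), (1,-1,2), (1,1,-2), (1,1,2),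
          (0,0,3), (0,0,-3), (-2,0,-1), (-2,0,1), (2,0,-1), (2,0,1), (0,-2,-1), (0,-2,1), (0,2,-1), (0,2,1)]"

definition mkv :: "real \<times> real \<times> real \<Rightarrow> vec3" where
  "mkv t = (case t of (a, b, c) \<Rightarrow> vector [a, b, c])"

definition fnl :: "real \<times> real \<times> real \<Rightarrow> real \<times> real \<times> real" where
  "fnl t = (case t of (a, b, c) \<Rightarrow> if \<bar>c\<bar> = 2 then (a, b, c/2) else if a = 0 \<and> b = 0 then (0, 0, c/3) else (a, b, c))"

definition ip3 :: "real \<times> real \<times> real \<Rightarrow> real \<times> real \<times> real \<Rightarrow> real" where
  "ip3 s t = (case s of (a, b, c) \<Rightarrow> case t of (d, e, f) \<Rightarrow> a*d + b*e + c*f)"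

lemma pts_sep: "\<forall>s\<in>set pts. \<forall>t\<in>set pts. t \<noteq> s \<longrightarrow> ip3 (fnl s) t < ip3 (fnl s) s"
  by (simp add: pts_def fnl_def ip3_def)

lemma pts_distinct: "distinct pts" by (simp add: pts_def)

lemma mkv_inner: "mkv s \<bullet> mkv t = ip3 s t"
  by (cases s; cases t) (simp add: mkv_def ip3_def vec3_inner)

lemma mkv_inj: "inj mkv"
  unfolding inj_def by (auto simp: mkv_def vec3_eq split: prod.splits)

lemma hrd_eq: "hexa_rhombic_dodecahedron = convex hull (mkv ` set pts)"
proof -
  have "({vector [a, b, c] | a b c :: real. a \<in> {-1,1} \<and> b \<in> {-1,1} \<and> c \<in> {-2,2}}
      \<union> {vector [0, 0, 3], vector [0, 0, -3]}
      \<union> {vector [a, 0, c] | a c :: real. a \<in> {-2,2} \<and> c \<in> {-1,1}}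
      \<union> {vector [0, b, c] | b c :: real. b \<in> {-2,2} \<and> c \<in> {-1,1}}) = mkv ` set pts"
    by (auto simp: pts_def mkv_def)
  thus ?thesis by (simp add: hexa_rhombic_dodecahedron_def)
qed

lemma ext_by_functional:
  fixes S :: "vec3 set"
  assumes "finite S" "x \<in> S" "\<And>y. y \<in> S \<Longrightarrow> y \<noteq> x \<Longrightarrow> f \<bullet> y < f \<bullet> x"
  shows "x extreme_point_of convex hull S"
proof -
  have "convex hull (S - {x}) \<subseteq> {y. f \<bullet> y < f \<bullet> x}"
    by (rule hull_minimal) (use assms(3) in \<open>auto intro: convex_halfspace_lt\<close>)
  hence "x \<notin> convex hull (S - {x})" by auto
  from extreme_point_of_convex_hull_insert[OF _ this] assms(1,2)
  show ?thesis by (simp add: insert_absorb)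
qed

lemma hrd_ext: "{x. x extreme_point_of hexa_rhombic_dodecahedron} = mkv ` set pts"
proof
  show "{x. x extreme_point_of hexa_rhombic_dodecahedron} \<subseteq> mkv ` set pts"
    unfolding hrd_eq using extreme_point_of_convex_hull by auto
  show "mkv ` set pts \<subseteq> {x. x extreme_point_of hexa_rhombic_dodecahedron}"
  proof
    fix x assume "x \<in> mkv ` set pts"
    then obtain s where s: "s \<in> set pts" "x = mkv s" by blast
    have "x extreme_point_of convex hull (mkv ` set pts)"
    proof (rule ext_by_functional[where f="mkv (fnl s)"])
      fix y assume "y \<in> mkv ` set pts" "y \<noteq> x"
      then obtain t where t: "t \<in> set pts" "y = mkv t" "t \<noteq> s" using s by auto
      show "mkv (fnl s) \<bullet> y < mkv (fnl s) \<bullet> x"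
        using pts_sep s t by (simp add: mkv_inner)
    qed (use s in auto)
    thus "x \<in> {x. x extreme_point_of hexa_rhombic_dodecahedron}" by (simp add: hrd_eq)
  qed
qed

lemma hrd_card: "card {x. x extreme_point_of hexa_rhombic_dodecahedron} = 18"
proof -
  have "card (mkv ` set pts) = card (set pts)" by (rule card_image, rule inj_on_subset[OF mkv_inj]) simp
  also have "\<dots> = length pts" by (rule distinct_card[OF pts_distinct])
  also have "\<dots> = 18" by (simp add: pts_def)
  finally show ?thesis by (simp add: hrd_ext)
qed

lemma hrd_compact: "compact hexa_rhombic_dodecahedron"
  unfolding hrd_eq by (rule finite_imp_compact_convex_hull) simp

lemma hrd_convex: "convex hexa_rhombic_dodecahedron"
  unfolding hrd_eq by simp


lemma P6_eq: "{(i, j). i < j \<and> j < (4::nat)} = {(0,1),(0,2),(0,3),(1,2),(1,3),(2,3)}"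
  by (auto simp: less_Suc_eq numeral_eq_Suc)

context obase begin

lemma Zset_eq: "{(i, j). i < j \<and> j < (4::nat) \<and> conorm v i j = 0} = {(i, j). i < j \<and> j < (4::nat)} - Ep"
  by (auto simp: Ep_def)

lemma Ep_sub: "Ep \<subseteq> {(i, j). i < j \<and> j < (4::nat)}" by (auto simp: Ep_def)

lemma card_Ep_V2:
  assumes V2: "voronoi_type_V2 L"
  shows "card Ep = 5"
proof -
  have c18: "card {x. x extreme_point_of (voronoi_domain L)} = 18"
    using comb_equiv_ext_card[OF V2[unfolded voronoi_type_V2_def] vor_compact vor_convex hrd_compact hrd_convex]
    by (simp add: hrd_card)
  have le6: "card Ep \<le> 6"
    using card_mono[OF _ Ep_sub] by (simp add: P6_eq)
  have "card Ep \<noteq> 6"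
  proof
    assume "card Ep = 6"
    hence eq: "Ep = {(i, j). i < j \<and> j < (4::nat)}"
      using card_subset_eq[OF _ Ep_sub] by (simp add: P6_eq)
    have "conorm v i j > 0" if "i \<in> {0..3}" "j \<in> {0..3}" "i \<noteq> j" for i j
    proof -
      have "(min i j, max i j) \<in> Ep" using eq that by auto
      hence "conorm v (min i j) (max i j) \<noteq> 0" by (simp add: Ep_def)
      hence "conorm v i j \<noteq> 0" by (cases "i \<le> j") (auto simp: min_def max_def p_sym)
      thus ?thesis using p_nonneg[OF that] by simp
    qed
    hence "card {x. x extreme_point_of (voronoi_domain L)} \<ge> 24" by (rule card_ext_ge)
    thus False using c18 by simp
  qed
  moreover have "\<not> card Ep \<le> 4"
  proof
    assume "card Ep \<le> 4"
    hence "(2::nat) ^ card Ep \<le> 2 ^ 4" by (rule power_increasing) simp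
    thus False using card_ext_le c18 by simp
  qed
  ultimately show ?thesis using le6 by linarith
qed

lemma one_zero:
  assumes V2: "voronoi_type_V2 L"
  shows "card {(i, j). i < j \<and> j < (4::nat) \<and> conorm v i j = 0} = 1"
proof -
  have "card ({(i, j). i < j \<and> j < (4::nat)} - Ep) = 6 - 5"
    using card_Diff_subset[OF _ Ep_sub] card_Ep_V2[OF V2] finite_Ep by (simp add: P6_eq)
  thus ?thesis by (simp add: Zset_eq)
qed

end

lemma lg_swap12: "lattice_gen a b c = lattice_gen b a c"
  unfolding lattice_gen_def by (auto; metis add.commute add.left_commute)

lemma lg_swap23: "lattice_gen a b c = lattice_gen a c b"
  unfolding lattice_gen_def by (auto; metis add.commute add.left_commute add.assoc)

lemma lg_replace: "lattice_gen (-(a+b+c)) b c = lattice_gen a b c"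
proof
  show "lattice_gen (-(a+b+c)) b c \<subseteq> lattice_gen a b c"
  proof
    fix x assume "x \<in> lattice_gen (-(a+b+c)) b c"
    then obtain i j k :: int where x: "x = of_int i *\<^sub>R (-(a+b+c)) + of_int j *\<^sub>R b + of_int k *\<^sub>R c"
      by (auto simp: lattice_gen_def)
    have "x = of_int (-i) *\<^sub>R a + of_int (j - i) *\<^sub>R b + of_int (k - i) *\<^sub>R c"
      by (simp add: x algebra_simps)
    thus "x \<in> lattice_gen a b c" unfolding lattice_gen_def by blast
  qed
  show "lattice_gen a b c \<subseteq> lattice_gen (-(a+b+c)) b c"
  proof
    fix x assume "x \<in> lattice_gen a b c"
    then obtain i j k :: int where x: "x = of_int i *\<^sub>R a + of_int j *\<^sub>R b + of_int k *\<^sub>R c"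
      by (auto simp: lattice_gen_def)
    have "x = of_int (-i) *\<^sub>R (-(a+b+c)) + of_int (j - i) *\<^sub>R b + of_int (k - i) *\<^sub>R c"
      by (simp add: x algebra_simps)
    thus "x \<in> lattice_gen (-(a+b+c)) b c" unfolding lattice_gen_def by blast
  qed
qed

lemma indep3_iff:
  fixes x y z :: vec3
  assumes "x \<noteq> y" "x \<noteq> z" "y \<noteq> z"
  shows "independent {x, y, z} \<longleftrightarrow> (\<forall>a b c. a *\<^sub>R x + b *\<^sub>R y + c *\<^sub>R z = 0 \<longrightarrow> a = 0 \<and> b = 0 \<and> c = 0)"
proof
  assume ind: "independent {x, y, z}"
  show "\<forall>a b c. a *\<^sub>R x + b *\<^sub>R y + c *\<^sub>R z = 0 \<longrightarrow> a = 0 \<and> b = 0 \<and> c = 0"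
  proof (intro allI impI)
    fix a b c assume h: "a *\<^sub>R x + b *\<^sub>R y + c *\<^sub>R z = 0"
    define u where "u w = (if w = x then a else if w = y then b else c)" for w
    have "(\<Sum>w\<in>{x, y, z}. u w *\<^sub>R w) = 0" using assms h by (simp add: u_def add.assoc)
    hence "\<forall>w\<in>{x,y,z}. u w = 0" using ind dependent_finite[of "{x,y,z}"] by blast
    thus "a = 0 \<and> b = 0 \<and> c = 0" using assms by (auto simp: u_def)
  qed
next
  assume h: "\<forall>a b c. a *\<^sub>R x + b *\<^sub>R y + c *\<^sub>R z = 0 \<longrightarrow> a = 0 \<and> b = 0 \<and> c = 0"
  show "independent {x, y, z}"
  proof (rule ccontr)
    assume "\<not> independent {x, y, z}"
    then obtain u where u: "\<exists>w\<in>{x,y,z}. u w \<noteq> 0" "(\<Sum>w\<in>{x, y, z}. u w *\<^sub>R w) = 0"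
      using dependent_finite[of "{x,y,z}"] by auto
    have "u x *\<^sub>R x + u y *\<^sub>R y + u z *\<^sub>R z = 0" using u(2) assms by (simp add: add.assoc)
    thus False using h u(1) by auto
  qed
qed

context sbase begin

lemma lin3: "a *\<^sub>R v 1 + b *\<^sub>R v 2 + c *\<^sub>R v 3 = 0 \<Longrightarrow> a = 0 \<and> b = 0 \<and> c = 0"
  using indep indep3_iff[OF dist] by blast

lemma v0_ne: "v 0 \<noteq> v 1" "v 0 \<noteq> v 2" "v 0 \<noteq> v 3"
proof -
  have e1: "2 *\<^sub>R v 1 + 1 *\<^sub>R v 2 + 1 *\<^sub>R v 3 = v 1 - v 0" by (simp add: v0 scaleR_2 algebra_simps)
  have e2: "1 *\<^sub>R v 1 + 2 *\<^sub>R v 2 + 1 *\<^sub>R v 3 = v 2 - v 0" by (simp add: v0 scaleR_2 algebra_simps)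
  have e3: "1 *\<^sub>R v 1 + 1 *\<^sub>R v 2 + 2 *\<^sub>R v 3 = v 3 - v 0" by (simp add: v0 scaleR_2 algebra_simps)
  show "v 0 \<noteq> v 1" using lin3[of 2 1 1] e1 by auto
  show "v 0 \<noteq> v 2" using lin3[of 1 2 1] e2 by auto
  show "v 0 \<noteq> v 3" using lin3[of 1 1 2] e3 by auto
qed

lemma v_inj: "i \<in> {0..3} \<Longrightarrow> j \<in> {0..3} \<Longrightarrow> v i = v j \<Longrightarrow> i = j"
proof -
  assume ij: "i \<in> {0..3}" "j \<in> {0..3}" "v i = v j"
  have "i = 0 \<or> i = 1 \<or> i = 2 \<or> i = 3" "j = 0 \<or> j = 1 \<or> j = 2 \<or> j = 3" using ij by auto
  thus "i = j" using ij(3) v0_ne dist by (auto simp: eq_commute[of "v 0"])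
qed

lemma basis0: "is_lattice_basis L (v 0) (v 2) (v 3)"
proof -
  have "lattice_gen (v 0) (v 2) (v 3) = L" unfolding v0 L_eq by (rule lg_replace)
  moreover have "independent {v 0, v 2, v 3}"
  proof -
    have "a = 0 \<and> b = 0 \<and> c = 0" if h: "a *\<^sub>R v 0 + b *\<^sub>R v 2 + c *\<^sub>R v 3 = 0" for a b c
    proof -
      have "(-a) *\<^sub>R v 1 + (b - a) *\<^sub>R v 2 + (c - a) *\<^sub>R v 3 = a *\<^sub>R v 0 + b *\<^sub>R v 2 + c *\<^sub>R v 3"
        by (simp add: v0 algebra_simps)
      thus ?thesis using lin3[of "-a" "b - a" "c - a"] h by simp
    qed
    thus ?thesis using indep3_iff[of "v 0" "v 2" "v 3"] v0_ne dist by blast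
  qed
  ultimately show ?thesis using v0_ne dist by (simp add: is_lattice_basis_def)
qed

end

lemma ilb_swap12: "is_lattice_basis L a b c = is_lattice_basis L b a c"
  unfolding is_lattice_basis_def by (auto simp: lg_swap12 insert_commute)

lemma ilb_swap23: "is_lattice_basis L a b c = is_lattice_basis L a c b"
  unfolding is_lattice_basis_def by (auto simp: lg_swap23 insert_commute)


lemma lg_perm:
  assumes "{a, b, c} = {a', b', c'}" "a \<noteq> b" "a \<noteq> c" "b \<noteq> c" "a' \<noteq> b'" "a' \<noteq> c'" "b' \<noteq> c'"
  shows "lattice_gen a b c = lattice_gen a' b' c'"
proof -
  have gen: "lattice_gen x y z = {w. \<exists>f::vec3\<Rightarrow>int. w = (\<Sum>u\<in>{x,y,z}. of_int (f u) *\<^sub>R u)}"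
    if "x \<noteq> y" "x \<noteq> z" "y \<noteq> z" for x y z
  proof
    show "lattice_gen x y z \<subseteq> {w. \<exists>f::vec3\<Rightarrow>int. w = (\<Sum>u\<in>{x,y,z}. of_int (f u) *\<^sub>R u)}"
    proof
      fix w assume "w \<in> lattice_gen x y z"
      then obtain i j k :: int where w: "w = of_int i *\<^sub>R x + of_int j *\<^sub>R y + of_int k *\<^sub>R z"
        by (auto simp: lattice_gen_def)
      define f where "f u = (if u = x then i else if u = y then j else k)" for u
      have "w = (\<Sum>u\<in>{x,y,z}. of_int (f u) *\<^sub>R u)" using that by (simp add: w f_def add.assoc)
      thus "w \<in> {w. \<exists>f::vec3\<Rightarrow>int. w = (\<Sum>u\<in>{x,y,z}. of_int (f u) *\<^sub>R u)}" by blast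
    qed
    show "{w. \<exists>f::vec3\<Rightarrow>int. w = (\<Sum>u\<in>{x,y,z}. of_int (f u) *\<^sub>R u)} \<subseteq> lattice_gen x y z"
    proof
      fix w assume "w \<in> {w. \<exists>f::vec3\<Rightarrow>int. w = (\<Sum>u\<in>{x,y,z}. of_int (f u) *\<^sub>R u)}"
      then obtain f :: "vec3 \<Rightarrow> int" where "w = (\<Sum>u\<in>{x,y,z}. of_int (f u) *\<^sub>R u)" by blast
      hence "w = of_int (f x) *\<^sub>R x + of_int (f y) *\<^sub>R y + of_int (f z) *\<^sub>R z" using that by (simp add: add.assoc)
      thus "w \<in> lattice_gen x y z" unfolding lattice_gen_def by blast
    qed
  qed
  show ?thesis using gen[of a b c] gen[of a' b' c'] assms by simp
qed

lemma ilb_set: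
  assumes "is_lattice_basis L a b c" "{a, b, c} = {a', b', c'}" "a' \<noteq> b'" "a' \<noteq> c'" "b' \<noteq> c'"
  shows "is_lattice_basis L a' b' c'"
  using assms lg_perm[of a b c a' b' c'] unfolding is_lattice_basis_def by auto

lemma sb_swap12: "is_superbase L v \<Longrightarrow> is_superbase L (v(1 := v 2, 2 := v 1))"
  unfolding is_superbase_def using ilb_swap12 by (auto simp: add_ac)

lemma sb_swap13: "is_superbase L v \<Longrightarrow> is_superbase L (v(1 := v 3, 3 := v 1))"
  unfolding is_superbase_def using ilb_swap12 ilb_swap23 by (auto simp: add_ac)

context sbase begin

lemma basis_missing:
  assumes "m \<in> {0..3::nat}"
  shows "\<exists>a b c. is_lattice_basis L a b c \<and> {a, b, c} = v ` ({0..3} - {m})"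
proof -
  have "m = 0 \<or> m = 1 \<or> m = 2 \<or> m = 3" using assms by auto
  moreover have m4: "{0..3::nat} - {0} = {1,2,3}" "{0..3::nat} - {1} = {0,2,3}" "{0..3::nat} - {2} = {0,1,3}" "{0..3::nat} - {3} = {0,1,2}"
    by auto
  moreover have "is_lattice_basis L (v 1) (v 2) (v 3)" using sb by (simp add: is_superbase_def)
  moreover have "is_lattice_basis L (v 0) (v 2) (v 3)" by (rule basis0)
  moreover have "is_lattice_basis L (v 0) (v 1) (v 3)"
    using sbase.basis0[OF sbase.intro[OF sb_swap12[OF sb]]] by simp
  moreover have "is_lattice_basis L (v 0) (v 2) (v 1)"
    using sbase.basis0[OF sbase.intro[OF sb_swap13[OF sb]]] by simp
  ultimately show ?thesis
  proof (elim disjE)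
    assume "m = 0" hence "{0..3::nat} - {m} = {1,2,3}" by auto
    thus ?thesis using \<open>is_lattice_basis L (v 1) (v 2) (v 3)\<close> by (rule_tac x="v 1" in exI, rule_tac x="v 2" in exI, rule_tac x="v 3" in exI) auto
  next
    assume "m = 1" hence "{0..3::nat} - {m} = {0,2,3}" by auto
    thus ?thesis using \<open>is_lattice_basis L (v 0) (v 2) (v 3)\<close> by (rule_tac x="v 0" in exI, rule_tac x="v 2" in exI, rule_tac x="v 3" in exI) auto
  next
    assume "m = 2" hence "{0..3::nat} - {m} = {0,1,3}" by auto
    thus ?thesis using \<open>is_lattice_basis L (v 0) (v 1) (v 3)\<close> by (rule_tac x="v 0" in exI, rule_tac x="v 1" in exI, rule_tac x="v 3" in exI) auto
  next
    assume "m = 3" hence "{0..3::nat} - {m} = {0,1,2}" by auto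
    thus ?thesis using \<open>is_lattice_basis L (v 0) (v 2) (v 1)\<close> by (rule_tac x="v 0" in exI, rule_tac x="v 2" in exI, rule_tac x="v 1" in exI) auto
  qed
qed

lemma perm_sb:
  assumes sp: "\<sigma> permutes {0..3}"
  shows "is_superbase L (v \<circ> \<sigma>)"
proof -
  have img: "\<sigma> ` {1,2,3} = {0..3} - {\<sigma> 0}"
  proof -
    have "\<sigma> ` {0..3} = {0..3}" by (rule permutes_image[OF sp])
    moreover have "{0..3::nat} = insert 0 {1,2,3}" by auto
    ultimately have "insert (\<sigma> 0) (\<sigma> ` {1,2,3}) = {0..3}" by simp
    moreover have "\<sigma> 0 \<notin> \<sigma> ` {1,2,3}" using permutes_inj[OF sp] by (auto simp: inj_eq)
    ultimately show ?thesis by auto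
  qed
  have s0: "\<sigma> 0 \<in> {0..3}" using permutes_in_image[OF sp] by simp
  obtain a b c where abc: "is_lattice_basis L a b c" "{a, b, c} = v ` ({0..3} - {\<sigma> 0})"
    using basis_missing[OF s0] by blast
  have inI: "\<sigma> k \<in> {0..3}" if "k \<in> {0..3}" for k using permutes_in_image[OF sp] that by simp
  have dst: "v (\<sigma> i) \<noteq> v (\<sigma> j)" if "i \<in> {0..3}" "j \<in> {0..3}" "i \<noteq> j" for i j
    using v_inj[OF inI[OF that(1)] inI[OF that(2)]] permutes_inj[OF sp] that by (auto simp: inj_eq)
  have "{a, b, c} = v ` (\<sigma> ` {1,2,3})" using abc(2) unfolding img .
  hence seteq: "{a, b, c} = {v (\<sigma> 1), v (\<sigma> 2), v (\<sigma> 3)}" by auto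
  have "is_lattice_basis L (v (\<sigma> 1)) (v (\<sigma> 2)) (v (\<sigma> 3))"
    by (rule ilb_set[OF abc(1) seteq]) (use dst[of 1 2] dst[of 1 3] dst[of 2 3] in auto)
  moreover have "v (\<sigma> 0) + (v (\<sigma> 1) + v (\<sigma> 2) + v (\<sigma> 3)) = 0"
    using sum_v perm_sum4[OF sp, of v] by (simp add: add.assoc)
  hence "v (\<sigma> 0) = - (v (\<sigma> 1) + v (\<sigma> 2) + v (\<sigma> 3))" by (rule iffD2[OF eq_neg_iff_add_eq_0])
  ultimately show ?thesis by (simp add: is_superbase_def)
qed

end

lemma perm_obtuse:
  assumes "is_obtuse v" "\<sigma> permutes {0..3}"
  shows "is_obtuse (v \<circ> \<sigma>)"
  unfolding is_obtuse_def
proof (intro allI impI)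
  fix i j :: nat assume "i < 4" "j < 4" "i \<noteq> j"
  moreover have "\<sigma> i \<in> {0..3}" "\<sigma> j \<in> {0..3}" using permutes_in_image[OF assms(2)] \<open>i<4\<close> \<open>j<4\<close> by auto
  moreover have "\<sigma> i \<noteq> \<sigma> j" using permutes_inj[OF assms(2)] \<open>i \<noteq> j\<close> by (auto simp: inj_eq)
  ultimately show "0 \<le> conorm (v \<circ> \<sigma>) i j" using assms(1) by (auto simp: is_obtuse_def conorm_def)
qed


lemma lattice_finite_ball:
  assumes lb: "is_lattice_basis L b1 b2 b3"
  shows "finite {y\<in>L. y \<bullet> y \<le> B}"
proof -
  have d: "b1 \<noteq> b2" "b1 \<noteq> b3" "b2 \<noteq> b3" and ind: "independent {b1, b2, b3}" and L: "L = lattice_gen b1 b2 b3"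
    using lb by (auto simp: is_lattice_basis_def)
  define f :: "real^3 \<Rightarrow> vec3" where "f x = x$1 *\<^sub>R b1 + x$2 *\<^sub>R b2 + x$3 *\<^sub>R b3" for x
  have lin: "linear f" unfolding f_def by (intro linearI) (auto simp: algebra_simps)
  have inj: "inj f"
  proof (rule injI)
    fix x y assume "f x = f y"
    hence "(x$1 - y$1) *\<^sub>R b1 + (x$2 - y$2) *\<^sub>R b2 + (x$3 - y$3) *\<^sub>R b3 = 0" by (simp add: f_def algebra_simps)
    hence "x$1 - y$1 = 0 \<and> x$2 - y$2 = 0 \<and> x$3 - y$3 = 0" using ind indep3_iff[OF d] by blast
    thus "x = y" by (simp add: vec_eq_iff forall_3)
  qed
  obtain g where g: "linear g" "g \<circ> f = id" using linear_injective_left_inverse[OF lin inj] by blast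
  obtain C where C: "C > 0" "\<And>y. norm (g y) \<le> C * norm y" using linear_bounded_pos[OF g(1)] by blast
  define K where "K = ceiling (C * (1 + B))"
  define h where "h t = (case t of (i, j, k) \<Rightarrow> of_int i *\<^sub>R b1 + of_int j *\<^sub>R b2 + of_int k *\<^sub>R (b3::vec3))" for t :: "int \<times> int \<times> int"
  have "{y\<in>L. y \<bullet> y \<le> B} \<subseteq> h ` ({-K..K} \<times> {-K..K} \<times> {-K..K})"
  proof
    fix y assume y: "y \<in> {y\<in>L. y \<bullet> y \<le> B}"
    then obtain i j k :: int where yy: "y = of_int i *\<^sub>R b1 + of_int j *\<^sub>R b2 + of_int k *\<^sub>R b3"
      unfolding L lattice_gen_def by blast
    define x :: "real^3" where "x = vector [of_int i, of_int j, of_int k]"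
    have fx: "f x = y" by (simp add: f_def x_def vector_3 yy)
    have gy: "g y = x" using g(2) fx by (metis comp_apply id_apply)
    have "norm y \<le> 1 + B"
    proof -
      have "0 \<le> (norm y - 1)^2" by simp
      hence "2 * norm y \<le> (norm y)^2 + 1" by (simp add: power2_diff)
      hence "norm y \<le> 1 + (norm y)^2" using norm_ge_zero[of y] by linarith
      thus ?thesis using y by (simp add: power2_norm_eq_inner)
    qed
    hence nx: "norm x \<le> C * (1 + B)" using C gy by (metis mult_left_mono order.trans less_imp_le)
    have "\<bar>x$n\<bar> \<le> C * (1 + B)" for n using component_le_norm_cart[of x n] nx by linarith
    hence "\<bar>real_of_int i\<bar> \<le> C * (1 + B)" "\<bar>real_of_int j\<bar> \<le> C * (1 + B)" "\<bar>real_of_int k\<bar> \<le> C * (1 + B)"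
      by (auto simp: x_def vector_3 dest: spec[of _ 1] spec[of _ 2] spec[of _ 3])
      (metis vector_3(1), metis vector_3(2), metis vector_3(3))
    hence "i \<in> {-K..K}" "j \<in> {-K..K}" "k \<in> {-K..K}" unfolding K_def by (auto simp: abs_le_iff; linarith)+
    hence "(i, j, k) \<in> {-K..K} \<times> {-K..K} \<times> {-K..K}" by simp
    moreover have "y = h (i, j, k)" by (simp add: h_def yy)
    ultimately show "y \<in> h ` ({-K..K} \<times> {-K..K} \<times> {-K..K})" by blast
  qed
  thus ?thesis by (rule finite_subset) simp
qed


lemma ilb_step:
  assumes lb: "is_lattice_basis L a b c"
  shows "is_lattice_basis L (-a) b (c + a)"
proof -
  have d: "a \<noteq> b" "a \<noteq> c" "b \<noteq> c" and ind: "independent {a, b, c}" and L: "L = lattice_gen a b c"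
    using lb by (auto simp: is_lattice_basis_def)
  note li = ind[unfolded indep3_iff[OF d], rule_format]
  have d2: "-a \<noteq> b" "-a \<noteq> c + a" "b \<noteq> c + a"
  proof -
    show "-a \<noteq> b" proof assume h: "-a = b" hence "1 *\<^sub>R a + 1 *\<^sub>R b + 0 *\<^sub>R c = 0" by (simp add: h[symmetric]) thus False using li[of 1 1 0] by simp qed
    show "-a \<noteq> c + a" proof assume h: "-a = c + a"
      have "c = c + a - a" by simp
      hence "c = -a - a" by (simp only: h[symmetric])
      hence "2 *\<^sub>R a + 0 *\<^sub>R b + 1 *\<^sub>R c = 0" by (simp add: scaleR_2)
      thus False using li[of 2 0 1] by simp qed
    show "b \<noteq> c + a" proof assume h: "b = c + a" hence "1 *\<^sub>R a + (-1) *\<^sub>R b + 1 *\<^sub>R c = 0" by (simp add: h) thus False using li[of 1 "-1" 1] by simp qed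
  qed
  have "independent {-a, b, c + a}"
    unfolding indep3_iff[OF d2]
  proof (intro allI impI)
    fix x y z assume "x *\<^sub>R (-a) + y *\<^sub>R b + z *\<^sub>R (c + a) = 0"
    hence "(z - x) *\<^sub>R a + y *\<^sub>R b + z *\<^sub>R c = 0" by (simp add: algebra_simps)
    hence "z - x = 0 \<and> y = 0 \<and> z = 0" by (rule li)
    thus "x = 0 \<and> y = 0 \<and> z = 0" by simp
  qed
  moreover have "lattice_gen (-a) b (c + a) = L"
  proof
    show "lattice_gen (-a) b (c + a) \<subseteq> L"
    proof
      fix x assume "x \<in> lattice_gen (-a) b (c + a)"
      then obtain i j k :: int where x: "x = of_int i *\<^sub>R (-a) + of_int j *\<^sub>R b + of_int k *\<^sub>R (c + a)"
        by (auto simp: lattice_gen_def)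
      have "x = of_int (k - i) *\<^sub>R a + of_int j *\<^sub>R b + of_int k *\<^sub>R c" by (simp add: x algebra_simps)
      thus "x \<in> L" unfolding L lattice_gen_def by blast
    qed
    show "L \<subseteq> lattice_gen (-a) b (c + a)"
    proof
      fix x assume "x \<in> L"
      then obtain i j k :: int where x: "x = of_int i *\<^sub>R a + of_int j *\<^sub>R b + of_int k *\<^sub>R c"
        unfolding L by (auto simp: lattice_gen_def)
      have "x = of_int (k - i) *\<^sub>R (-a) + of_int j *\<^sub>R b + of_int k *\<^sub>R (c + a)" by (simp add: x algebra_simps)
      thus "x \<in> lattice_gen (-a) b (c + a)" unfolding lattice_gen_def by blast
    qed
  qed
  ultimately show ?thesis using d2 by (simp add: is_lattice_basis_def)
qed

lemma perm12:
  assumes "i \<in> {0..3::nat}" "j \<in> {0..3}" "i \<noteq> j"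
  shows "\<exists>\<sigma>. \<sigma> permutes {0..3} \<and> \<sigma> 1 = i \<and> \<sigma> 2 = j"
proof -
  define j' where "j' = Transposition.transpose 1 i j"
  have j'I: "j' \<in> {0..3}" using assms by (auto simp: j'_def Transposition.transpose_def)
  have j'1: "j' \<noteq> 1" using assms by (auto simp: j'_def Transposition.transpose_def)
  define \<sigma> where "\<sigma> = Transposition.transpose 1 i \<circ> Transposition.transpose 2 j'"
  have "\<sigma> permutes {0..3}" unfolding \<sigma>_def
    by (rule permutes_compose; rule permutes_swap_id) (use assms j'I in auto)
  moreover have "\<sigma> 1 = i" using j'1 by (simp add: \<sigma>_def Transposition.transpose_def)
  moreover have "\<sigma> 2 = j" using assms by (auto simp: \<sigma>_def j'_def Transposition.transpose_def)
  ultimately show ?thesis by blast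
qed

definition sbv :: "vec3 \<Rightarrow> vec3 \<Rightarrow> vec3 \<Rightarrow> nat \<Rightarrow> vec3" where
  "sbv a b c k = (if k = 0 then -(a+b+c) else if k = 1 then a else if k = 2 then b else c)"

definition Nf :: "vec3 \<times> vec3 \<times> vec3 \<Rightarrow> real" where
  "Nf t = (case t of (a, b, c) \<Rightarrow> a \<bullet> a + b \<bullet> b + c \<bullet> c + (a+b+c) \<bullet> (a+b+c))"

lemma sbv_sb: "is_lattice_basis L a b c \<Longrightarrow> is_superbase L (sbv a b c)"
  by (simp add: is_superbase_def sbv_def)

lemma Nf_sum: "is_superbase L w \<Longrightarrow> Nf (w 1, w 2, w 3) = (\<Sum>k\<in>{0..3}. w k \<bullet> w k)"
  by (simp add: Nf_def sum4 is_superbase_def del: minus_add_distrib)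

lemma exists_obtuse:
  assumes "is_lattice L"
  shows "\<exists>v. obtuse_superbase L v"
proof -
  obtain b1 b2 b3 where lb: "is_lattice_basis L b1 b2 b3" using assms by (auto simp: is_lattice_def)
  define N0 where "N0 = Nf (b1, b2, b3)"
  define T where "T = {t. (case t of (a, b, c) \<Rightarrow> is_lattice_basis L a b c) \<and> Nf t \<le> N0}"
  define F where "F = {y\<in>L. y \<bullet> y \<le> N0}"
  have finF: "finite F" unfolding F_def by (rule lattice_finite_ball[OF lb])
  have inL: "a \<in> L" "b \<in> L" "c \<in> L" if "is_lattice_basis L a b c" for a b c
  proof -
    have L: "L = lattice_gen a b c" using that by (simp add: is_lattice_basis_def)
    show "a \<in> L" unfolding L lattice_gen_def by (rule CollectI, rule exI[of _ 1], rule exI[of _ 0], rule exI[of _ 0]) simp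
    show "b \<in> L" unfolding L lattice_gen_def by (rule CollectI, rule exI[of _ 0], rule exI[of _ 1], rule exI[of _ 0]) simp
    show "c \<in> L" unfolding L lattice_gen_def by (rule CollectI, rule exI[of _ 0], rule exI[of _ 0], rule exI[of _ 1]) simp
  qed
  have "T \<subseteq> F \<times> F \<times> F"
  proof
    fix t assume "t \<in> T"
    then obtain a b c where t: "t = (a, b, c)" "is_lattice_basis L a b c" "Nf (a, b, c) \<le> N0"
      unfolding T_def by auto
    have nn: "0 \<le> a \<bullet> a" "0 \<le> b \<bullet> b" "0 \<le> c \<bullet> c" "0 \<le> (a+b+c) \<bullet> (a+b+c)" by simp_all
    moreover have "a \<bullet> a + b \<bullet> b + c \<bullet> c + (a+b+c) \<bullet> (a+b+c) \<le> N0" using t(3) by (simp add: Nf_def)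
    ultimately have "a \<bullet> a \<le> N0" "b \<bullet> b \<le> N0" "c \<bullet> c \<le> N0" by linarith+
    thus "t \<in> F \<times> F \<times> F" using t inL[OF t(2)] by (simp add: F_def)
  qed
  hence finT: "finite T" using finF by (meson finite_SigmaI finite_subset)
  have "(b1, b2, b3) \<in> T" using lb by (simp add: T_def N0_def)
  hence neT: "T \<noteq> {}" by blast
  define m where "m = Min (Nf ` T)"
  have "m \<in> Nf ` T" unfolding m_def using finT neT by (intro Min_in) auto
  then obtain t where tT: "t \<in> T" and tm: "Nf t = m" by auto
  have mle: "m \<le> Nf t'" if "t' \<in> T" for t' unfolding m_def using finT that by simp
  obtain a b c where t: "t = (a, b, c)" and lbt: "is_lattice_basis L a b c" and NN: "Nf (a,b,c) \<le> N0"
    using tT unfolding T_def by auto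
  define v where "v = sbv a b c"
  have sbv: "is_superbase L v" unfolding v_def by (rule sbv_sb[OF lbt])
  interpret sbase L v by unfold_locales (rule sbv)
  have Nv: "(\<Sum>k\<in>{0..3}. v k \<bullet> v k) = m" using Nf_sum[OF sbv] tm t by (simp add: v_def sbv_def)
  have "is_obtuse v"
    unfolding is_obtuse_def
  proof (intro allI impI, rule ccontr)
    fix i j :: nat assume ij: "i < 4" "j < 4" "i \<noteq> j" and neg: "\<not> 0 \<le> conorm v i j"
    obtain \<sigma> where sp: "\<sigma> permutes {0..3}" and s12: "\<sigma> 1 = i" "\<sigma> 2 = j"
      using perm12[of i j] ij by auto
    define w where "w = v \<circ> \<sigma>"
    have sbw: "is_superbase L w" unfolding w_def by (rule perm_sb[OF sp])
    have pos: "w 1 \<bullet> w 2 > 0" using neg s12 by (simp add: w_def conorm_def)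
    have lbw: "is_lattice_basis L (w 1) (w 2) (w 3)" and w0: "w 0 = - (w 1 + w 2 + w 3)"
      using sbw by (auto simp: is_superbase_def)
    have lbu: "is_lattice_basis L (- w 1) (w 2) (w 3 + w 1)" by (rule ilb_step[OF lbw])
    have Nw: "Nf (w 1, w 2, w 3) = m"
      using Nf_sum[OF sbw] Nv perm_sum4[OF sp, of "\<lambda>k. v k \<bullet> v k"] by (simp add: w_def sum4)
    have "Nf (- w 1, w 2, w 3 + w 1) = Nf (w 1, w 2, w 3) - 2 * (w 1 \<bullet> w 2)"
      by (simp add: Nf_def inner_add_left inner_add_right inner_commute algebra_simps)
    hence lt: "Nf (- w 1, w 2, w 3 + w 1) < m" using Nw pos by simp
    hence "(- w 1, w 2, w 3 + w 1) \<in> T" using lbu NN tm t by (simp add: T_def)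
    thus False using mle lt by fastforce
  qed
  thus ?thesis using sbv by (auto simp: obtuse_superbase_def)
qed


type_synonym i3 = "int \<times> int \<times> int"

definition T16 :: "i3 list" where "T16 = [(- 1,- 1,- 1), (- 1,- 1,0), (- 1,0,- 1), (- 1,0,0), (0,- 1,- 1), (0,- 1,0), (0,- 1,1), (0,0,- 1), (0,0,1), (0,1,- 1), (0,1,0), (0,1,1), (1,0,0), (1,0,1), (1,1,0), (1,1,1)]"

definition add3 :: "i3 \<Rightarrow> i3 \<Rightarrow> i3" where
  "add3 s t = (case s of (a, b, c) \<Rightarrow> case t of (d, e, f) \<Rightarrow> (a + d, b + e, c + f))"

definition Bc :: "nat \<Rightarrow> nat \<Rightarrow> i3" where
  "Bc b k = (if b = 0 then (if k = 0 then (-1,-1,-1) else if k = 1 then (1,0,0) else if k = 2 then (0,1,0) else (0,0,1))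
             else (if k = 0 then (-1,-1,0) else if k = 1 then (1,0,1) else if k = 2 then (0,1,0) else (0,0,-1)))"

definition sc3 :: "int \<Rightarrow> i3 \<Rightarrow> i3" where
  "sc3 e t = (case t of (a, b, c) \<Rightarrow> (e * a, e * b, e * c))"

definition gen96 :: "int \<Rightarrow> nat \<Rightarrow> nat list \<Rightarrow> i3 \<times> i3 \<times> i3" where
  "gen96 e b pl = (sc3 e (Bc b (pl ! 1)), sc3 e (Bc b (pl ! 2)), sc3 e (Bc b (pl ! 3)))"

definition P24 :: "nat list list" where "P24 = [[0,1,2,3], [0,1,3,2], [0,2,1,3], [0,2,3,1], [0,3,1,2], [0,3,2,1], [1,0,2,3], [1,0,3,2], [1,2,0,3], [1,2,3,0], [1,3,0,2], [1,3,2,0], [2,0,1,3], [2,0,3,1], [2,1,0,3], [2,1,3,0], [2,3,0,1], [2,3,1,0], [3,0,1,2], [3,0,2,1], [3,1,0,2], [3,1,2,0], [3,2,0,1], [3,2,1,0]]"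

definition L96 :: "(i3 \<times> i3 \<times> i3) list" where
  "L96 = [gen96 e b pl. e \<leftarrow> [1, -1], b \<leftarrow> [0, 1], pl \<leftarrow> P24]"

definition P96 :: "(i3 \<times> i3) list" where "P96 = [((- 1,- 1,- 1),(0,0,1)), ((- 1,- 1,- 1),(0,1,0)), ((- 1,- 1,- 1),(0,1,1)), ((- 1,- 1,- 1),(1,0,0)), ((- 1,- 1,- 1),(1,0,1)), ((- 1,- 1,- 1),(1,1,0)), ((- 1,- 1,0),(0,0,- 1)), ((- 1,- 1,0),(0,1,- 1)), ((- 1,- 1,0),(0,1,0)), ((- 1,- 1,0),(1,0,0)), ((- 1,- 1,0),(1,0,1)), ((- 1,- 1,0),(1,1,1)), ((- 1,0,- 1),(0,- 1,0)), ((- 1,0,- 1),(0,- 1,1)), ((- 1,0,- 1),(0,0,1)), ((- 1,0,- 1),(1,0,0)), ((- 1,0,- 1),(1,1,0)), ((- 1,0,- 1),(1,1,1)), ((- 1,0,0),(0,- 1,- 1)), ((- 1,0,0),(0,- 1,0)), ((- 1,0,0),(0,0,- 1)), ((- 1,0,0),(1,0,1)), ((- 1,0,0),(1,1,0)), ((- 1,0,0),(1,1,1)), ((0,- 1,- 1),(- 1,0,0)), ((0,- 1,- 1),(0,0,1)), ((0,- 1,- 1),(0,1,0)), ((0,- 1,- 1),(1,1,1)), ((0,- 1,0),(- 1,0,- 1)), ((0,- 1,0),(- 1,0,0)), ((0,- 1,0),(0,0,- 1)), ((0,- 1,0),(0,0,1)), ((0,- 1,0),(0,1,- 1)), ((0,-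 1,0),(0,1,1)), ((0,- 1,0),(1,1,0)), ((0,- 1,0),(1,1,1)), ((0,- 1,1),(- 1,0,- 1)), ((0,- 1,1),(0,0,- 1)), ((0,- 1,1),(0,1,0)), ((0,- 1,1),(1,1,0)), ((0,0,- 1),(- 1,- 1,0)), ((0,0,- 1),(- 1,0,0)), ((0,0,- 1),(0,- 1,0)), ((0,0,- 1),(0,- 1,1)), ((0,0,- 1),(0,1,0)), ((0,0,- 1),(0,1,1)), ((0,0,- 1),(1,0,1)), ((0,0,- 1),(1,1,1)), ((0,0,1),(- 1,- 1,- 1)), ((0,0,1),(- 1,0,- 1)), ((0,0,1),(0,- 1,- 1)), ((0,0,1),(0,- 1,0)), ((0,0,1),(0,1,- 1)), ((0,0,1),(0,1,0)), ((0,0,1),(1,0,0)), ((0,0,1),(1,1,0)), ((0,1,- 1),(- 1,- 1,0)), ((0,1,- 1),(0,- 1,0)), ((0,1,- 1),(0,0,1)), ((0,1,- 1),(1,0,1)), ((0,1,0),(- 1,- 1,- 1)), ((0,1,0),(- 1,- 1,0)), ((0,1,0),(0,- 1,- 1)), ((0,1,0),(0,- 1,1)), ((0,1,0),(0,0,- 1)), ((0,1,0),(0,0,1)), ((0,1,0),(1,0,0)), ((0,1,0),(1,0,1)), ((0,1,1),(- 1,- 1,- 1)), ((0,1,1),(0,- 1,0)), ((0,1,1),(0,0,- 1)), ((0,1,1),(1,0,0)), ((1,0,0),(- 1,- 1,- 1)), ((1,0,0),(- 1,- 1,0)), ((1,0,0),(- 1,0,- 1)), ((1,0,0),(0,0,1)),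 ((1,0,0),(0,1,0)), ((1,0,0),(0,1,1)), ((1,0,1),(- 1,- 1,- 1)), ((1,0,1),(- 1,- 1,0)), ((1,0,1),(- 1,0,0)), ((1,0,1),(0,0,- 1)), ((1,0,1),(0,1,- 1)), ((1,0,1),(0,1,0)), ((1,1,0),(- 1,- 1,- 1)), ((1,1,0),(- 1,0,- 1)), ((1,1,0),(- 1,0,0)), ((1,1,0),(0,- 1,0)), ((1,1,0),(0,- 1,1)), ((1,1,0),(0,0,1)), ((1,1,1),(- 1,- 1,0)), ((1,1,1),(- 1,0,- 1)), ((1,1,1),(- 1,0,0)), ((1,1,1),(0,- 1,- 1)), ((1,1,1),(0,- 1,0)), ((1,1,1),(0,0,- 1))]"

lemma enum_pairs: "\<forall>c1\<in>set T16. \<forall>c2\<in>set T16. add3 c1 c2 \<in> set T16 \<longrightarrow> (c1, c2) \<in> set P96"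
  by code_simp

lemma enum_triples: "\<forall>(c1, c2)\<in>set P96. \<forall>c3\<in>set T16. add3 c1 c3 \<in> set T16 \<longrightarrow> add3 c2 c3 \<in> set T16 \<longrightarrow>
   add3 (add3 c1 c2) c3 \<in> set T16 \<longrightarrow> (c1, c2, c3) \<in> set L96"
  by code_simp

lemma enum96:
  assumes "c1 \<in> set T16" "c2 \<in> set T16" "c3 \<in> set T16" "add3 c1 c2 \<in> set T16" "add3 c1 c3 \<in> set T16"
    "add3 c2 c3 \<in> set T16" "add3 (add3 c1 c2) c3 \<in> set T16"
  shows "(c1, c2, c3) \<in> set L96"
proof -
  have "(c1, c2) \<in> set P96" using enum_pairs assms(1,2,4) by blast
  thus ?thesis using enum_triples assms(3,5,6,7) by fast
qed


lemma int_odd_sq: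
  fixes d m :: int
  assumes "d \<in> {-1, 0, 1}"
  shows "d^2 \<le> (d + 2 * m)^2"
proof (cases "m = 0")
  case False
  hence "\<bar>d\<bar> \<le> \<bar>d + 2 * m\<bar>" using assms by auto
  thus ?thesis by (simp add: abs_le_square_iff)
qed simp

context sbase begin

lemma sell3: "(norm (a *\<^sub>R v 1 + b *\<^sub>R v 2 + c *\<^sub>R v 3))^2 =
   conorm v 0 1 * a^2 + conorm v 0 2 * b^2 + conorm v 0 3 * c^2
   + conorm v 1 2 * (a - b)^2 + conorm v 1 3 * (a - c)^2 + conorm v 2 3 * (b - c)^2"
  unfolding power2_norm_eq_inner
  by (simp add: conorm_def v0 inner_add_left inner_add_right inner_diff_left inner_diff_right inner_commute algebra_simps power2_eq_square)

definition cv :: "i3 \<Rightarrow> vec3" where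
  "cv t = (case t of (a, b, c) \<Rightarrow> of_int a *\<^sub>R v 1 + of_int b *\<^sub>R v 2 + of_int c *\<^sub>R v 3)"

lemma cv_norm: "(norm (cv (x1, x2, x3)))^2 =
   conorm v 0 1 * (of_int x1)^2 + conorm v 0 2 * (of_int x2)^2 + conorm v 0 3 * (of_int x3)^2
   + conorm v 1 2 * (of_int x1 - of_int x2)^2 + conorm v 1 3 * (of_int x1 - of_int x3)^2 + conorm v 2 3 * (of_int x2 - of_int x3)^2"
  unfolding cv_def prod.case by (rule sell3)

lemma cv_add: "cv (add3 s t) = cv s + cv t"
  by (cases s; cases t) (simp add: cv_def add3_def algebra_simps)

lemma in_L_cv: "y \<in> L \<Longrightarrow> \<exists>t. y = cv t"
  unfolding L_eq lattice_gen_def cv_def by auto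

lemma cv_in_L: "cv t \<in> L"
  unfolding L_eq lattice_gen_def cv_def by (cases t) auto

end

context obase begin

lemma minU:
  fixes e1 e2 e3 :: int
  assumes e: "e1 \<in> {0, 1}" "e2 \<in> {0, 1}" "e3 \<in> {0, 1}" and z: "z \<in> L"
  shows "(norm (cv (e1, e2, e3)))^2 \<le> (norm (cv (e1, e2, e3) + 2 *\<^sub>R z))^2"
proof -
  obtain m1 m2 m3 :: int where zz: "z = cv (m1, m2, m3)" using in_L_cv[OF z] by auto
  have "cv (e1, e2, e3) + 2 *\<^sub>R z = cv (e1 + 2 * m1, e2 + 2 * m2, e3 + 2 * m3)"
    by (simp add: zz cv_def algebra_simps)
  hence eq: "(norm (cv (e1, e2, e3) + 2 *\<^sub>R z))^2 =
     conorm v 0 1 * (of_int (e1 + 2*m1))^2 + conorm v 0 2 * (of_int (e2 + 2*m2))^2 + conorm v 0 3 * (of_int (e3 + 2*m3))^2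
   + conorm v 1 2 * (of_int ((e1 - e2) + 2 * (m1 - m2)))^2 + conorm v 1 3 * (of_int ((e1 - e3) + 2 * (m1 - m3)))^2
   + conorm v 2 3 * (of_int ((e2 - e3) + 2 * (m2 - m3)))^2"
    by (simp only: cv_norm) (simp add: algebra_simps)
  have eq0: "(norm (cv (e1, e2, e3)))^2 =
     conorm v 0 1 * (of_int e1)^2 + conorm v 0 2 * (of_int e2)^2 + conorm v 0 3 * (of_int e3)^2
   + conorm v 1 2 * (of_int (e1 - e2))^2 + conorm v 1 3 * (of_int (e1 - e3))^2 + conorm v 2 3 * (of_int (e2 - e3))^2"
    by (simp only: cv_norm) (simp add: algebra_simps)
  have t: "c * (of_int d)^2 \<le> c * (of_int (d + 2 * m))^2" if "c \<ge> 0" "d \<in> {-1,0,1}" for c :: real and d m :: int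
  proof -
    have "d^2 \<le> (d + 2 * m)^2" by (rule int_odd_sq[OF that(2)])
    hence "(of_int d :: real)^2 \<le> (of_int (d + 2 * m))^2" by (metis of_int_le_iff of_int_power)
    thus ?thesis using that(1) by (rule mult_left_mono)
  qed
  have p: "conorm v 0 1 \<ge> 0" "conorm v 0 2 \<ge> 0" "conorm v 0 3 \<ge> 0" "conorm v 1 2 \<ge> 0" "conorm v 1 3 \<ge> 0" "conorm v 2 3 \<ge> 0"
    by (auto intro: p_nonneg)
  have d: "e1 \<in> {-1,0,1}" "e2 \<in> {-1,0,1}" "e3 \<in> {-1,0,1}" "e1 - e2 \<in> {-1,0,1}" "e1 - e3 \<in> {-1,0,1}" "e2 - e3 \<in> {-1,0,1}"
    using e by auto
  show ?thesis unfolding eq eq0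
    using t[OF p(1) d(1), of m1] t[OF p(2) d(2), of m2] t[OF p(3) d(3), of m3]
      t[OF p(4) d(4), of "m1 - m2"] t[OF p(5) d(5), of "m1 - m3"] t[OF p(6) d(6), of "m2 - m3"]
    by linarith
qed


lemma minV:
  assumes pos: "conorm v 0 1 > 0" "conorm v 0 2 > 0" "conorm v 0 3 > 0" "conorm v 1 2 > 0" "conorm v 1 3 > 0"
    and mn: "\<And>z. z \<in> L \<Longrightarrow> (norm (cv (n1, n2, n3)))^2 \<le> (norm (cv (n1, n2, n3) + 2 *\<^sub>R z))^2"
  shows "\<bar>n1\<bar> \<le> 1 \<and> \<bar>n2\<bar> \<le> 1 \<and> \<bar>n3\<bar> \<le> 1 \<and> \<bar>n1 - n2\<bar> \<le> 1 \<and> \<bar>n1 - n3\<bar> \<le> 1"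
proof -
  define r1 where "r1 = n1 mod 2" define r2 where "r2 = n2 mod 2" define r3 where "r3 = n3 mod 2"
  define q1 where "q1 = n1 div 2" define q2 where "q2 = n2 div 2" define q3 where "q3 = n3 div 2"
  have n: "n1 = r1 + 2 * q1" "n2 = r2 + 2 * q2" "n3 = r3 + 2 * q3"
    by (simp_all add: r1_def r2_def r3_def q1_def q2_def q3_def)
  have r: "r1 \<in> {0,1}" "r2 \<in> {0,1}" "r3 \<in> {0,1}" by (auto simp: r1_def r2_def r3_def)
  have h: "cv (n1, n2, n3) + 2 *\<^sub>R cv (-q1, -q2, -q3) = cv (r1, r2, r3)"
    by (simp add: cv_def n algebra_simps)
  have le: "(norm (cv (n1, n2, n3)))^2 \<le> (norm (cv (r1, r2, r3)))^2"
    using mn[OF cv_in_L[of "(-q1, -q2, -q3)"]] unfolding h .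
  have eq: "(norm (cv (n1, n2, n3)))^2 =
     conorm v 0 1 * (of_int (r1 + 2*q1))^2 + conorm v 0 2 * (of_int (r2 + 2*q2))^2 + conorm v 0 3 * (of_int (r3 + 2*q3))^2
   + conorm v 1 2 * (of_int ((r1 - r2) + 2 * (q1 - q2)))^2 + conorm v 1 3 * (of_int ((r1 - r3) + 2 * (q1 - q3)))^2
   + conorm v 2 3 * (of_int ((r2 - r3) + 2 * (q2 - q3)))^2"
    by (simp only: cv_norm n) (simp add: algebra_simps)
  have eq0: "(norm (cv (r1, r2, r3)))^2 =
     conorm v 0 1 * (of_int r1)^2 + conorm v 0 2 * (of_int r2)^2 + conorm v 0 3 * (of_int r3)^2
   + conorm v 1 2 * (of_int (r1 - r2))^2 + conorm v 1 3 * (of_int (r1 - r3))^2 + conorm v 2 3 * (of_int (r2 - r3))^2"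
    by (simp only: cv_norm) (simp add: algebra_simps)
  have t: "c * (of_int d)^2 \<le> c * (of_int (d + 2 * m))^2" if "c \<ge> 0" "d \<in> {-1,0,1}" for c :: real and d m :: int
  proof -
    have "d^2 \<le> (d + 2 * m)^2" by (rule int_odd_sq[OF that(2)])
    hence "(of_int d :: real)^2 \<le> (of_int (d + 2 * m))^2" by (metis of_int_le_iff of_int_power)
    thus ?thesis using that(1) by (rule mult_left_mono)
  qed
  have p: "conorm v 0 1 \<ge> 0" "conorm v 0 2 \<ge> 0" "conorm v 0 3 \<ge> 0" "conorm v 1 2 \<ge> 0" "conorm v 1 3 \<ge> 0" "conorm v 2 3 \<ge> 0"
    by (auto intro: p_nonneg)
  have d: "r1 \<in> {-1,0,1}" "r2 \<in> {-1,0,1}" "r3 \<in> {-1,0,1}" "r1 - r2 \<in> {-1,0,1}" "r1 - r3 \<in> {-1,0,1}" "r2 - r3 \<in> {-1,0,1}"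
    using r by auto
  note ts = t[OF p(1) d(1), of q1] t[OF p(2) d(2), of q2] t[OF p(3) d(3), of q3]
      t[OF p(4) d(4), of "q1 - q2"] t[OF p(5) d(5), of "q1 - q3"] t[OF p(6) d(6), of "q2 - q3"]
  have e1: "conorm v 0 1 * (of_int (r1 + 2*q1))^2 = conorm v 0 1 * (of_int r1)^2" using le eq eq0 ts by linarith
  have e2: "conorm v 0 2 * (of_int (r2 + 2*q2))^2 = conorm v 0 2 * (of_int r2)^2" using le eq eq0 ts by linarith
  have e3: "conorm v 0 3 * (of_int (r3 + 2*q3))^2 = conorm v 0 3 * (of_int r3)^2" using le eq eq0 ts by linarith
  have e4: "conorm v 1 2 * (of_int ((r1 - r2) + 2*(q1 - q2)))^2 = conorm v 1 2 * (of_int (r1 - r2))^2" using le eq eq0 ts by linarith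
  have e5: "conorm v 1 3 * (of_int ((r1 - r3) + 2*(q1 - q3)))^2 = conorm v 1 3 * (of_int (r1 - r3))^2" using le eq eq0 ts by linarith
  have sq: "\<bar>x\<bar> \<le> 1" if "(of_int x :: real)^2 = (of_int y)^2" "y \<in> {-1,0,1}" for x y :: int
  proof -
    have "x^2 = y^2" using that(1) by (metis of_int_eq_iff of_int_power)
    hence "x = y \<or> x = - y" by (simp add: power2_eq_iff)
    hence "\<bar>x\<bar> = \<bar>y\<bar>" by auto
    thus ?thesis using that(2) by auto
  qed
  have "\<bar>r1 + 2*q1\<bar> \<le> 1" using sq[OF _ d(1)] e1 pos(1) by simp
  moreover have "\<bar>r2 + 2*q2\<bar> \<le> 1" using sq[OF _ d(2)] e2 pos(2) by simp
  moreover have "\<bar>r3 + 2*q3\<bar> \<le> 1" using sq[OF _ d(3)] e3 pos(3) by simp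
  moreover have "\<bar>(r1 - r2) + 2*(q1 - q2)\<bar> \<le> 1" using sq[OF _ d(4)] e4 pos(4) by simp
  moreover have "\<bar>(r1 - r3) + 2*(q1 - q3)\<bar> \<le> 1" using sq[OF _ d(5)] e5 pos(5) by simp
  ultimately show ?thesis using n by (simp add: algebra_simps)
qed

end

lemma T16_mem:
  fixes n1 n2 n3 :: int
  assumes "\<bar>n1\<bar> \<le> 1 \<and> \<bar>n2\<bar> \<le> 1 \<and> \<bar>n3\<bar> \<le> 1 \<and> \<bar>n1 - n2\<bar> \<le> 1 \<and> \<bar>n1 - n3\<bar> \<le> 1"
    and "(n1, n2, n3) \<noteq> (0, 0, 0)"
  shows "(n1, n2, n3) \<in> set T16"
proof -
  have "n1 \<in> {-1,0,1}" "n2 \<in> {-1,0,1}" "n3 \<in> {-1,0,1}" using assms(1) by auto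
  moreover have "\<forall>a\<in>{-1,0,1::int}. \<forall>b\<in>{-1,0,1::int}. \<forall>c\<in>{-1,0,1::int}.
     \<bar>a\<bar> \<le> 1 \<and> \<bar>b\<bar> \<le> 1 \<and> \<bar>c\<bar> \<le> 1 \<and> \<bar>a - b\<bar> \<le> 1 \<and> \<bar>a - c\<bar> \<le> 1 \<longrightarrow> (a, b, c) \<noteq> (0, 0, 0) \<longrightarrow> (a, b, c) \<in> set T16"
    by code_simp
  ultimately show ?thesis using assms by blast
qed


lemma P24_props: "\<forall>pl\<in>set P24. length pl = 4 \<and> distinct pl \<and> set pl = {0,1,2,3}"
  by code_simp

lemma list4: "length xs = 4 \<Longrightarrow> xs = [xs!0, xs!1, xs!2, xs!3]"
  by (simp add: list_eq_iff_nth_eq less_Suc_eq numeral_eq_Suc)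

lemma P24_nth: "pl \<in> set P24 \<Longrightarrow> k < 4 \<Longrightarrow> pl ! k < 4"
  using P24_props nth_mem[of k pl] by fastforce

lemma P24_sum:
  fixes B :: "nat \<Rightarrow> vec3"
  assumes "pl \<in> set P24"
  shows "B (pl!0) + B (pl!1) + B (pl!2) + B (pl!3) = (\<Sum>j\<in>{0..3}. B j)"
proof -
  have p: "length pl = 4" "distinct pl" "set pl = {0,1,2,3}" using P24_props assms by auto
  have "(\<Sum>j\<in>{0..3}. B j) = (\<Sum>j\<in>set pl. B j)" using p(3) by (simp add: atLeastAtMost_insertL insert_commute eval_nat_numeral)
  also have "\<dots> = sum_list (map B pl)" using p(2) by (simp add: sum_list_distinct_conv_sum_set)
  also have "\<dots> = B (pl!0) + B (pl!1) + B (pl!2) + B (pl!3)" by (subst list4[OF p(1)]) (simp add: add.assoc)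
  finally show ?thesis by simp
qed

lemma P24_set:
  assumes "pl \<in> set P24"
  shows "{pl!0, pl!1, pl!2, pl!3} = {0,1,2,3}"
proof -
  have p: "length pl = 4" "set pl = {0,1,2,3}" using P24_props assms by auto
  have "set pl = {pl!0, pl!1, pl!2, pl!3}" by (subst list4[OF p(1)]) simp
  thus ?thesis using p(2) by simp
qed

locale v2base = obase +
  assumes z23: "conorm v 2 3 = 0"
    and pos: "conorm v 0 1 > 0" "conorm v 0 2 > 0" "conorm v 0 3 > 0" "conorm v 1 2 > 0" "conorm v 1 3 > 0"
begin

definition Bv :: "nat \<Rightarrow> nat \<Rightarrow> vec3" where "Bv b = (if b = 0 then v else sbB2 v)"

lemma cv_Bc: "b \<in> {0, 1} \<Longrightarrow> j < 4 \<Longrightarrow> cv (Bc b j) = Bv b j"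
proof -
  assume b: "b \<in> {0, 1}" and j: "j < 4"
  hence "j = 0 \<or> j = 1 \<or> j = 2 \<or> j = 3" by auto
  thus ?thesis using b by (auto simp: cv_def Bc_def Bv_def sbB2_def v0 algebra_simps)
qed

lemma Bv_sum: "b \<in> {0, 1} \<Longrightarrow> (\<Sum>j\<in>{0..3}. Bv b j) = 0"
  by (auto simp: Bv_def sbB2_def sum4 v0)

lemma cv_sc3: "cv (sc3 e t) = of_int e *\<^sub>R cv t"
  by (cases t) (simp add: cv_def sc3_def algebra_simps)

lemma classify:
  assumes u: "obtuse_superbase L u"
  shows "\<exists>e b pl. e \<in> {1, -1} \<and> b \<in> {0, 1} \<and> pl \<in> set P24 \<and> (\<forall>k<4. u k = of_int e *\<^sub>R Bv b (pl ! k))"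
proof -
  interpret U: obase L u using u by unfold_locales (auto simp: obtuse_superbase_def)
  have uL: "u 1 \<in> L" "u 2 \<in> L" "u 3 \<in> L"
    using U.cv_in_L[of "(1,0,0)"] U.cv_in_L[of "(0,1,0)"] U.cv_in_L[of "(0,0,1)"] by (simp_all add: U.cv_def)
  obtain c1 c2 c3 where c: "u 1 = cv c1" "u 2 = cv c2" "u 3 = cv c3" using in_L_cv uL by metis
  have c1': "u (Suc 0) = cv c1" using c(1) by simp
  have mem: "t \<in> set T16" if ut: "U.cv (e1, e2, e3) = cv t" and e: "e1 \<in> {0,1}" "e2 \<in> {0,1}" "e3 \<in> {0,1}"
    and ne: "(e1, e2, e3) \<noteq> (0, 0, 0)" for e1 e2 e3 t
  proof -
    obtain n1 n2 n3 where t: "t = (n1, n2, n3)" by (cases t)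
    have mn: "(norm (cv (n1, n2, n3)))^2 \<le> (norm (cv (n1, n2, n3) + 2 *\<^sub>R z))^2" if "z \<in> L" for z
      using U.minU[OF e that] ut t by simp
    have "U.cv (e1, e2, e3) \<noteq> 0"
    proof
      assume "U.cv (e1, e2, e3) = 0"
      hence "real_of_int e1 *\<^sub>R u 1 + real_of_int e2 *\<^sub>R u 2 + real_of_int e3 *\<^sub>R u 3 = 0" by (simp add: U.cv_def)
      hence "real_of_int e1 = 0 \<and> real_of_int e2 = 0 \<and> real_of_int e3 = 0" by (rule U.lin3)
      thus False using ne by simp
    qed
    hence "(n1, n2, n3) \<noteq> (0, 0, 0)" using ut t by (auto simp: cv_def)
    thus ?thesis using T16_mem[OF minV[OF pos mn]] t by simp
  qed
  have "c1 \<in> set T16" by (rule mem[of 1 0 0]) (auto simp: U.cv_def c c1')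
  moreover have "c2 \<in> set T16" by (rule mem[of 0 1 0]) (auto simp: U.cv_def c c1')
  moreover have "c3 \<in> set T16" by (rule mem[of 0 0 1]) (auto simp: U.cv_def c c1')
  moreover have "add3 c1 c2 \<in> set T16" by (rule mem[of 1 1 0]) (auto simp: U.cv_def c c1' cv_add)
  moreover have "add3 c1 c3 \<in> set T16" by (rule mem[of 1 0 1]) (auto simp: U.cv_def c c1' cv_add)
  moreover have "add3 c2 c3 \<in> set T16" by (rule mem[of 0 1 1]) (auto simp: U.cv_def c c1' cv_add)
  moreover have "add3 (add3 c1 c2) c3 \<in> set T16" by (rule mem[of 1 1 1]) (auto simp: U.cv_def c c1' cv_add)
  ultimately have "(c1, c2, c3) \<in> set L96" by (rule enum96)
  then obtain e b pl where ebp: "e \<in> {1, -1}" "b \<in> {0, 1::nat}" "pl \<in> set P24" and g: "(c1, c2, c3) = gen96 e b pl"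
    unfolding L96_def by auto
  have uk: "u k = of_int e *\<^sub>R Bv b (pl ! k)" if "k \<in> {1,2,3}" for k
  proof -
    have "u k = cv (sc3 e (Bc b (pl ! k)))" using that g c by (auto simp: gen96_def)
    also have "\<dots> = of_int e *\<^sub>R Bv b (pl ! k)"
      using cv_Bc[OF ebp(2) P24_nth[OF ebp(3)]] that by (auto simp: cv_sc3)
    finally show ?thesis .
  qed
  have "u 0 = of_int e *\<^sub>R Bv b (pl ! 0)"
  proof -
    have "Bv b (pl!0) + Bv b (pl!1) + Bv b (pl!2) + Bv b (pl!3) = 0"
      using P24_sum[OF ebp(3), of "Bv b"] Bv_sum[OF ebp(2)] by simp
    hence "Bv b (pl!0) + (Bv b (pl!1) + Bv b (pl!2) + Bv b (pl!3)) = 0" by (simp add: add.assoc)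
    hence "Bv b (pl!0) = - (Bv b (pl!1) + Bv b (pl!2) + Bv b (pl!3))" by (rule iffD2[OF eq_neg_iff_add_eq_0])
    have uk1: "u 1 = of_int e *\<^sub>R Bv b (pl ! 1)" "u 2 = of_int e *\<^sub>R Bv b (pl ! 2)" "u 3 = of_int e *\<^sub>R Bv b (pl ! 3)"
      by (rule uk; simp)+
    have "u 0 = - (u 1 + u 2 + u 3)" by (rule U.v0)
    also have "\<dots> = of_int e *\<^sub>R (- (Bv b (pl!1) + Bv b (pl!2) + Bv b (pl!3)))"
      by (simp only: uk1 scaleR_add_right scaleR_minus_right)
    finally show ?thesis using \<open>Bv b (pl!0) = - (Bv b (pl!1) + Bv b (pl!2) + Bv b (pl!3))\<close> by simp
  qed
  hence "\<forall>k<4. u k = of_int e *\<^sub>R Bv b (pl ! k)" using uk by (auto simp: less_Suc_eq numeral_eq_Suc)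
  thus ?thesis using ebp by blast
qed

end

context sbase begin

lemma B2_conorms:
  assumes z: "conorm v 2 3 = 0"
  shows "conorm (sbB2 v) 2 3 = 0" "conorm (sbB2 v) 1 3 = conorm v 0 3" "conorm (sbB2 v) 1 2 = conorm v 1 2"
    "conorm (sbB2 v) 0 1 = conorm v 0 1" "conorm (sbB2 v) 0 2 = conorm v 0 2" "conorm (sbB2 v) 0 3 = conorm v 1 3"
  using z by (simp_all add: conorm_def sbB2_def v0 inner_add_left inner_add_right inner_commute algebra_simps)

lemma B2_sb:
  shows "is_superbase L (sbB2 v)"
proof -
  have lb: "is_lattice_basis L (v 1) (v 2) (v 3)" using sb by (simp add: is_superbase_def)
  have "is_lattice_basis L (v 3) (v 2) (v 1)" using lb ilb_swap12 ilb_swap23 by metis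
  hence "is_lattice_basis L (- v 3) (v 2) (v 1 + v 3)" by (rule ilb_step)
  hence "is_lattice_basis L (v 1 + v 3) (v 2) (- v 3)" using ilb_swap12 ilb_swap23 by metis
  thus ?thesis by (simp add: is_superbase_def sbB2_def v0 algebra_simps)
qed

end

context obase begin

lemma B2_obtuse:
  assumes z: "conorm v 2 3 = 0"
  shows "obtuse_superbase L (sbB2 v)"
proof -
  note c = B2_conorms[OF z]
  have nn: "conorm v i j \<ge> 0" if "i < 4" "j < 4" "i \<noteq> j" for i j using p_nonneg that by auto
  have "conorm (sbB2 v) i j \<ge> 0" if "i < 4" "j < 4" "i \<noteq> j" for i j
  proof -
    have "i = 0 \<or> i = 1 \<or> i = 2 \<or> i = 3" "j = 0 \<or> j = 1 \<or> j = 2 \<or> j = 3" using that by auto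
    thus ?thesis using that c nn[of 0 3] nn[of 1 2] nn[of 0 1] nn[of 0 2] nn[of 1 3]
      using conorm_sym[of "sbB2 v" 1 0] conorm_sym[of "sbB2 v" 2 0] conorm_sym[of "sbB2 v" 3 0]
        conorm_sym[of "sbB2 v" 2 1] conorm_sym[of "sbB2 v" 3 1] conorm_sym[of "sbB2 v" 3 2]
      by auto
  qed
  thus ?thesis using B2_sb by (simp add: obtuse_superbase_def is_obtuse_def)
qed

end

lemma all4: "(\<forall>k<4::nat. P k) \<longleftrightarrow> P 0 \<and> P 1 \<and> P 2 \<and> P 3"
  by (auto simp: less_Suc_eq numeral_eq_Suc)

lemma sq_corner_simps: "sq_corner W 0 = conorm W 1 3" "sq_corner W 1 = conorm W 1 2"
  "sq_corner W 2 = conorm W 0 3" "sq_corner W 3 = conorm W 0 2"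
  by (simp_all add: sq_corner_def)

lemma rot_in: "r < 4 \<Longrightarrow> (\<lambda>k. (r + k) mod 4) \<in> D4"
  unfolding D4_def by blast

lemma ref_in: "r < 4 \<Longrightarrow> (\<lambda>k. (r + 4 - k) mod 4) \<in> D4"
  unfolding D4_def by blast

lemma D4_cases:
  assumes "Q (\<lambda>k. (0 + k) mod 4) \<or> Q (\<lambda>k. (1 + k) mod 4) \<or> Q (\<lambda>k. (2 + k) mod 4) \<or> Q (\<lambda>k. (3 + k) mod 4)
    \<or> Q (\<lambda>k. (0 + 4 - k) mod 4) \<or> Q (\<lambda>k. (1 + 4 - k) mod 4) \<or> Q (\<lambda>k. (2 + 4 - k) mod 4) \<or> Q (\<lambda>k. (3 + 4 - k) mod 4)"
  shows "\<exists>g\<in>D4. Q g"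
proof -
  have m: "(\<lambda>k. (0 + k) mod 4) \<in> D4" "(\<lambda>k. (1 + k) mod 4) \<in> D4" "(\<lambda>k. (2 + k) mod 4) \<in> D4" "(\<lambda>k. (3 + k) mod 4) \<in> D4"
    "(\<lambda>k. (0 + 4 - k) mod 4) \<in> D4" "(\<lambda>k. (1 + 4 - k) mod 4) \<in> D4" "(\<lambda>k. (2 + 4 - k) mod 4) \<in> D4" "(\<lambda>k. (3 + 4 - k) mod 4) \<in> D4"
    by (rule rot_in ref_in; simp)+
  show ?thesis using assms m by blast
qed

context v2base begin

definition tab :: "nat \<Rightarrow> nat \<Rightarrow> nat \<Rightarrow> real" where
  "tab b i j = (if b = 0 then conorm v (min i j) (max i j)
     else if (min i j, max i j) = (0, 3) then conorm v 1 3
     else if (min i j, max i j) = (1, 3) then conorm v 0 3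
     else if (min i j, max i j) = (2, 3) then 0 else conorm v (min i j) (max i j))"

lemma conorm_minmax: "conorm X i j = conorm X (min i j) (max i j)"
  by (cases "i \<le> j") (auto simp: min_def max_def conorm_sym)

lemma Bv_conorm:
  assumes "b \<in> {0, 1}" "i < 4" "j < 4" "i \<noteq> j"
  shows "conorm (Bv b) i j = tab b i j"
proof -
  define a where "a = min i j"
  define c where "c = max i j"
  have ac: "a < c" "c < 4" using assms(2-4) by (auto simp: a_def c_def)
  hence "(a, c) \<in> {(0,1),(0,2),(0,3),(1,2),(1,3),(2,3)}" by (auto simp: less_Suc_eq numeral_eq_Suc)
  moreover have "conorm (Bv b) i j = conorm (Bv b) a c" unfolding a_def c_def by (rule conorm_minmax)
  moreover have "tab b i j = (if b = 0 then conorm v a c else if (a, c) = (0, 3) then conorm v 1 3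
     else if (a, c) = (1, 3) then conorm v 0 3 else if (a, c) = (2, 3) then 0 else conorm v a c)"
    unfolding tab_def by (simp only: a_def[symmetric] c_def[symmetric])
  moreover note B2_conorms[OF z23]
  ultimately show ?thesis using assms(1) by (auto simp: Bv_def)
qed

lemma conorm_rel:
  assumes "\<forall>k<4. W k = of_int e *\<^sub>R Bv b (pl ! k)" "e \<in> {1, -1}" "i < 4" "j < 4"
  shows "conorm W i j = conorm (Bv b) (pl ! i) (pl ! j)"
proof -
  have "(of_int e :: real) * of_int e = 1" using assms(2) by auto
  thus ?thesis using assms by (simp add: conorm_def)
qed

lemma iso:
  assumes u: "obtuse_superbase L u"
  shows "sb_isometric u v \<or> sb_isometric u (sbB2 v)"
proof -
  obtain e b pl where ebp: "e \<in> {1, -1}" "b \<in> {0, 1::nat}" "pl \<in> set P24"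
    and uk: "\<forall>k<4. u k = of_int e *\<^sub>R Bv b (pl ! k)"
    using classify[OF u] by blast
  define f where "f x = (of_int e :: real) *\<^sub>R (x :: vec3)" for x
  have ee: "(of_int e :: real) * of_int e = 1" using ebp(1) by auto
  have ot: "orthogonal_transformation f"
    unfolding orthogonal_transformation_def f_def using ee by (auto intro: linearI simp: algebra_simps)
  have fu: "f (u k) = Bv b (pl ! k)" if "k < 4" for k using uk that ee by (simp add: f_def)
  have "f ` sb_set u = {Bv b (pl!0), Bv b (pl!1), Bv b (pl!2), Bv b (pl!3)}"
    by (simp add: sb_set_def fu)
  also have "\<dots> = Bv b ` {pl!0, pl!1, pl!2, pl!3}" by simp
  also have "\<dots> = sb_set (Bv b)" using P24_set[OF ebp(3)] by (simp add: sb_set_def)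
  finally have "sb_isometric u (Bv b)" using ot unfolding sb_isometric_def by blast
  thus ?thesis using ebp(2) by (auto simp: Bv_def)
qed

lemma pos_ne: "conorm v 0 1 \<noteq> 0" "conorm v 0 2 \<noteq> 0" "conorm v 0 3 \<noteq> 0" "conorm v 1 2 \<noteq> 0" "conorm v 1 3 \<noteq> 0"
  using pos by auto

lemma tab_zero:
  assumes "b \<in> {0, 1::nat}" "i < 4" "j < 4" "i \<noteq> j" "tab b i j = 0"
  shows "(min i j, max i j) = (2, 3)"
proof -
  have "(min i j, max i j) \<in> {(0,1),(0,2),(0,3),(1,2),(1,3),(2,3)}"
    using assms(2-4) by (auto simp: less_Suc_eq numeral_eq_Suc min_def max_def)
  thus ?thesis using assms(1,5) pos_ne by (auto simp: tab_def)
qed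

lemma P24_23: "\<forall>pl\<in>set P24. (min (pl!2) (pl!3), max (pl!2) (pl!3)) = (2, 3) \<longrightarrow>
   pl = [0,1,2,3] \<or> pl = [1,0,2,3] \<or> pl = [0,1,3,2] \<or> pl = [1,0,3,2]"
  by code_simp

lemma d4_core:
  assumes b: "b \<in> {0, 1}" and pl: "pl \<in> set P24"
    and rel: "\<And>i j. i < 4 \<Longrightarrow> j < 4 \<Longrightarrow> conorm W i j = conorm (Bv b) (pl ! i) (pl ! j)"
    and z: "conorm W 2 3 = 0"
  shows "conorm W 0 1 = conorm v 0 1 \<and> (\<exists>g\<in>D4. \<forall>k<4. sq_corner W k = sq_corner v (g k))" (is ?G)
proof -
  have d: "pl ! i \<noteq> pl ! j" if "i < 4" "j < 4" "i \<noteq> j" for i j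
    using P24_props pl that by (auto simp: nth_eq_iff_index_eq)
  have lt: "pl ! i < 4" if "i < 4" for i using P24_nth[OF pl that] .
  have T: "conorm W i j = tab b (pl ! i) (pl ! j)" if "i < 4" "j < 4" "i \<noteq> j" for i j
    using rel[OF that(1,2)] Bv_conorm[OF b lt[OF that(1)] lt[OF that(2)] d[OF that]] by simp
  note TT = T[of 0 1] T[of 1 3] T[of 1 2] T[of 0 3] T[of 0 2] T[of 2 3]
  have "(min (pl!2) (pl!3), max (pl!2) (pl!3)) = (2, 3)"
    using tab_zero[OF b lt[of 2] lt[of 3] d[of 2 3]] z TT by simp
  hence pl4: "pl = [0,1,2,3] \<or> pl = [1,0,2,3] \<or> pl = [0,1,3,2] \<or> pl = [1,0,3,2]" using P24_23 pl by blast
  have c1: "?G" if "pl = [0,1,2,3]" "b = 0"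
  proof -
    have w: "conorm W 0 1 = conorm v 0 1" "conorm W 1 3 = conorm v 1 3" "conorm W 1 2 = conorm v 1 2" "conorm W 0 3 = conorm v 0 3" "conorm W 0 2 = conorm v 0 2"
      using TT that by (simp_all add: tab_def numeral_2_eq_2 numeral_3_eq_3)
    define gg where "gg = (\<lambda>k::nat. (0 + k) mod 4)"
    have gD: "gg \<in> D4" unfolding gg_def by (rule rot_in) simp
    have gv: "gg 0 = 0" "gg 1 = 1" "gg 2 = 2" "gg 3 = 3" by (simp_all add: gg_def)
    have "\<forall>k<4. sq_corner W k = sq_corner v (gg k)"
      unfolding all4 gv sq_corner_simps w by simp
    thus ?G using w(1) gD by blast
  qed
  have c2: "?G" if "pl = [0,1,2,3]" "b = 1"
  proof -
    have w: "conorm W 0 1 = conorm v 0 1" "conorm W 1 3 = conorm v 0 3" "conorm W 1 2 = conorm v 1 2" "conorm W 0 3 = conorm v 1 3" "conorm W 0 2 = conorm v 0 2"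
      using TT that by (simp_all add: tab_def numeral_2_eq_2 numeral_3_eq_3)
    define gg where "gg = (\<lambda>k::nat. (2 + 4 - k) mod 4)"
    have gD: "gg \<in> D4" unfolding gg_def by (rule ref_in) simp
    have gv: "gg 0 = 2" "gg 1 = 1" "gg 2 = 0" "gg 3 = 3" by (simp_all add: gg_def)
    have "\<forall>k<4. sq_corner W k = sq_corner v (gg k)"
      unfolding all4 gv sq_corner_simps w by simp
    thus ?G using w(1) gD by blast
  qed
  have c3: "?G" if "pl = [1,0,2,3]" "b = 0"
  proof -
    have w: "conorm W 0 1 = conorm v 0 1" "conorm W 1 3 = conorm v 0 3" "conorm W 1 2 = conorm v 0 2" "conorm W 0 3 = conorm v 1 3" "conorm W 0 2 = conorm v 1 2"
      using TT that by (simp_all add: tab_def numeral_2_eq_2 numeral_3_eq_3)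
    define gg where "gg = (\<lambda>k::nat. (2 + k) mod 4)"
    have gD: "gg \<in> D4" unfolding gg_def by (rule rot_in) simp
    have gv: "gg 0 = 2" "gg 1 = 3" "gg 2 = 0" "gg 3 = 1" by (simp_all add: gg_def)
    have "\<forall>k<4. sq_corner W k = sq_corner v (gg k)"
      unfolding all4 gv sq_corner_simps w by simp
    thus ?G using w(1) gD by blast
  qed
  have c4: "?G" if "pl = [1,0,2,3]" "b = 1"
  proof -
    have w: "conorm W 0 1 = conorm v 0 1" "conorm W 1 3 = conorm v 1 3" "conorm W 1 2 = conorm v 0 2" "conorm W 0 3 = conorm v 0 3" "conorm W 0 2 = conorm v 1 2"
      using TT that by (simp_all add: tab_def numeral_2_eq_2 numeral_3_eq_3)
    define gg where "gg = (\<lambda>k::nat. (0 + 4 - k) mod 4)"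
    have gD: "gg \<in> D4" unfolding gg_def by (rule ref_in) simp
    have gv: "gg 0 = 0" "gg 1 = 3" "gg 2 = 2" "gg 3 = 1" by (simp_all add: gg_def)
    have "\<forall>k<4. sq_corner W k = sq_corner v (gg k)"
      unfolding all4 gv sq_corner_simps w by simp
    thus ?G using w(1) gD by blast
  qed
  have c5: "?G" if "pl = [0,1,3,2]" "b = 0"
  proof -
    have w: "conorm W 0 1 = conorm v 0 1" "conorm W 1 3 = conorm v 1 2" "conorm W 1 2 = conorm v 1 3" "conorm W 0 3 = conorm v 0 2" "conorm W 0 2 = conorm v 0 3"
      using TT that by (simp_all add: tab_def numeral_2_eq_2 numeral_3_eq_3)
    define gg where "gg = (\<lambda>k::nat. (1 + 4 - k) mod 4)"
    have gD: "gg \<in> D4" unfolding gg_def by (rule ref_in) simp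
    have gv: "gg 0 = 1" "gg 1 = 0" "gg 2 = 3" "gg 3 = 2" by (simp_all add: gg_def)
    have "\<forall>k<4. sq_corner W k = sq_corner v (gg k)"
      unfolding all4 gv sq_corner_simps w by simp
    thus ?G using w(1) gD by blast
  qed
  have c6: "?G" if "pl = [0,1,3,2]" "b = 1"
  proof -
    have w: "conorm W 0 1 = conorm v 0 1" "conorm W 1 3 = conorm v 1 2" "conorm W 1 2 = conorm v 0 3" "conorm W 0 3 = conorm v 0 2" "conorm W 0 2 = conorm v 1 3"
      using TT that by (simp_all add: tab_def numeral_2_eq_2 numeral_3_eq_3)
    define gg where "gg = (\<lambda>k::nat. (1 + k) mod 4)"
    have gD: "gg \<in> D4" unfolding gg_def by (rule rot_in) simp
    have gv: "gg 0 = 1" "gg 1 = 2" "gg 2 = 3" "gg 3 = 0" by (simp_all add: gg_def)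
    have "\<forall>k<4. sq_corner W k = sq_corner v (gg k)"
      unfolding all4 gv sq_corner_simps w by simp
    thus ?G using w(1) gD by blast
  qed
  have c7: "?G" if "pl = [1,0,3,2]" "b = 0"
  proof -
    have w: "conorm W 0 1 = conorm v 0 1" "conorm W 1 3 = conorm v 0 2" "conorm W 1 2 = conorm v 0 3" "conorm W 0 3 = conorm v 1 2" "conorm W 0 2 = conorm v 1 3"
      using TT that by (simp_all add: tab_def numeral_2_eq_2 numeral_3_eq_3)
    define gg where "gg = (\<lambda>k::nat. (3 + 4 - k) mod 4)"
    have gD: "gg \<in> D4" unfolding gg_def by (rule ref_in) simp
    have gv: "gg 0 = 3" "gg 1 = 2" "gg 2 = 1" "gg 3 = 0" by (simp_all add: gg_def)
    have "\<forall>k<4. sq_corner W k = sq_corner v (gg k)"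
      unfolding all4 gv sq_corner_simps w by simp
    thus ?G using w(1) gD by blast
  qed
  have c8: "?G" if "pl = [1,0,3,2]" "b = 1"
  proof -
    have w: "conorm W 0 1 = conorm v 0 1" "conorm W 1 3 = conorm v 0 2" "conorm W 1 2 = conorm v 1 3" "conorm W 0 3 = conorm v 1 2" "conorm W 0 2 = conorm v 0 3"
      using TT that by (simp_all add: tab_def numeral_2_eq_2 numeral_3_eq_3)
    define gg where "gg = (\<lambda>k::nat. (3 + k) mod 4)"
    have gD: "gg \<in> D4" unfolding gg_def by (rule rot_in) simp
    have gv: "gg 0 = 3" "gg 1 = 0" "gg 2 = 1" "gg 3 = 2" by (simp_all add: gg_def)
    have "\<forall>k<4. sq_corner W k = sq_corner v (gg k)"
      unfolding all4 gv sq_corner_simps w by simp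
    thus ?G using w(1) gD by blast
  qed
  show ?G using c1 c2 c3 c4 c5 c6 c7 c8 pl4 b by blast
qed

end

lemma obase_of: "obtuse_superbase L v \<Longrightarrow> obase L v"
  by unfold_locales (auto simp: obtuse_superbase_def)

lemma perm23:
  assumes "i < j" "j < (4::nat)"
  shows "\<exists>\<sigma>. \<sigma> permutes {0..3} \<and> \<sigma> 2 = i \<and> \<sigma> 3 = j"
proof -
  obtain \<sigma> where s: "\<sigma> permutes {0..3}" "\<sigma> 1 = i" "\<sigma> 2 = j" using perm12[of i j] assms by auto
  define \<tau> where "\<tau> = Transposition.transpose (1::nat) 2 \<circ> Transposition.transpose 1 3"
  have t: "\<tau> permutes {0..3}" unfolding \<tau>_def by (rule permutes_compose; rule permutes_swap_id) auto
  have "\<tau> 2 = 1" "\<tau> 3 = 2" by (simp_all add: \<tau>_def Transposition.transpose_def)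
  hence "(\<sigma> \<circ> \<tau>) 2 = i" "(\<sigma> \<circ> \<tau>) 3 = j" using s by simp_all
  moreover have "(\<sigma> \<circ> \<tau>) permutes {0..3}" by (rule permutes_compose[OF t s(1)])
  ultimately show ?thesis by blast
qed

lemma zero_pair:
  assumes ob: "obtuse_superbase L v" and V2: "voronoi_type_V2 L"
  shows "\<exists>i j. i < j \<and> j < 4 \<and> {(i, j). i < j \<and> j < (4::nat) \<and> conorm v i j = 0} = {(i, j)}"
proof -
  interpret obase L v by (rule obase_of[OF ob])
  have "card {(i, j). i < j \<and> j < (4::nat) \<and> conorm v i j = 0} = 1" by (rule one_zero[OF V2])
  then obtain x where x: "{(i, j). i < j \<and> j < (4::nat) \<and> conorm v i j = 0} = {x}" by (auto simp: card_1_singleton_iff)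
  obtain i j where "x = (i, j)" by (cases x)
  moreover have "x \<in> {(i, j). i < j \<and> j < (4::nat) \<and> conorm v i j = 0}" using x by simp
  ultimately show ?thesis using x by auto
qed

lemma perm_zero:
  assumes ob: "obtuse_superbase L v" and V2: "voronoi_type_V2 L"
  shows "\<exists>\<sigma>. \<sigma> permutes {0..3} \<and> conorm (v \<circ> \<sigma>) 2 3 = 0"
proof -
  obtain i j where ij: "i < j" "j < 4" and Z: "{(i, j). i < j \<and> j < (4::nat) \<and> conorm v i j = 0} = {(i, j)}"
    using zero_pair[OF ob V2] by blast
  have "conorm v i j = 0" using Z by auto
  moreover obtain \<sigma> where "\<sigma> permutes {0..3}" "\<sigma> 2 = i" "\<sigma> 3 = j" using perm23[OF ij] by blast
  ultimately show ?thesis by (auto simp: conorm_def)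
qed

lemma perm_osb:
  assumes "obtuse_superbase L v" "\<sigma> permutes {0..3}"
  shows "obtuse_superbase L (v \<circ> \<sigma>)"
proof -
  interpret obase L v by (rule obase_of[OF assms(1)])
  show ?thesis using perm_sb[OF assms(2)] perm_obtuse[OF obt assms(2)] by (simp add: obtuse_superbase_def)
qed

lemma v2base_of:
  assumes ob: "obtuse_superbase L v" and V2: "voronoi_type_V2 L" and z: "conorm v 2 3 = 0"
  shows "v2base L v"
proof -
  interpret obase L v by (rule obase_of[OF ob])
  obtain i j where ij: "i < j" "j < 4" and Z: "{(i, j). i < j \<and> j < (4::nat) \<and> conorm v i j = 0} = {(i, j)}"
    using zero_pair[OF ob V2] by blast
  have "(2, 3) \<in> {(i, j). i < j \<and> j < (4::nat) \<and> conorm v i j = 0}" using z by simp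
  hence Z23: "{(i, j). i < j \<and> j < (4::nat) \<and> conorm v i j = 0} = {(2, 3)}" using Z by auto
  have ne: "conorm v a b \<noteq> 0" if "a < b" "b < 4" "(a, b) \<noteq> (2, 3)" for a b
  proof
    assume "conorm v a b = 0"
    hence "(a, b) \<in> {(i, j). i < j \<and> j < (4::nat) \<and> conorm v i j = 0}" using that by simp
    thus False using Z23 that by simp
  qed
  have "conorm v a b > 0" if "a < b" "b < 4" "(a, b) \<noteq> (2, 3)" for a b
    using ne[OF that] p_nonneg[of a b] that by force
  thus ?thesis using z by unfold_locales auto
qed

theorem lemma4p2:
  fixes L :: "vec3 set"
  assumes "is_lattice L" and "voronoi_type_V2 L"
  shows
    \<comment> \<open>(a)\<close>
    "(\<exists>v. obtuse_superbase L v \<and> v 2 \<bullet> v 3 = 0) \<and>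
     (\<forall>v. obtuse_superbase L v \<and> v 2 \<bullet> v 3 = 0 \<longrightarrow>
        obtuse_superbase L (sbB2 v) \<and>
        (\<forall>u. obtuse_superbase L u \<longrightarrow> sb_isometric u v \<or> sb_isometric u (sbB2 v))) \<and>
     \<comment> \<open>(b)\<close>
     (\<forall>v. obtuse_superbase L v \<and> conorm v 2 3 = 0 \<longrightarrow>
        conorm (sbB2 v) 2 3 = 0 \<and> conorm (sbB2 v) 1 3 = conorm v 0 3 \<and>
        conorm (sbB2 v) 1 2 = conorm v 1 2 \<and> conorm (sbB2 v) 0 1 = conorm v 0 1 \<and>
        conorm (sbB2 v) 0 2 = conorm v 0 2 \<and> conorm (sbB2 v) 0 3 = conorm v 1 3) \<and>
     \<comment> \<open>(c)\<close>
     (\<forall>v. obtuse_superbase L v \<longrightarrow>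
        card {(i, j). i < j \<and> j < (4::nat) \<and> conorm v i j = 0} = 1 \<and>
        (\<exists>\<sigma>. \<sigma> permutes {0..3} \<and> conorm (v \<circ> \<sigma>) 2 3 = 0)) \<and>
     (\<forall>u w \<sigma> \<tau>. obtuse_superbase L u \<and> obtuse_superbase L w \<and>
        \<sigma> permutes {0..3} \<and> \<tau> permutes {0..3} \<and>
        conorm (u \<circ> \<sigma>) 2 3 = 0 \<and> conorm (w \<circ> \<tau>) 2 3 = 0 \<longrightarrow>
        conorm (w \<circ> \<tau>) 0 1 = conorm (u \<circ> \<sigma>) 0 1 \<and>
        (\<exists>g\<in>D4. \<forall>k<4. sq_corner (w \<circ> \<tau>) k = sq_corner (u \<circ> \<sigma>) (g k)))"
  using assms
proof -
  assume lat: "is_lattice L" and V2: "voronoi_type_V2 L"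
  have A1: "\<exists>v. obtuse_superbase L v \<and> v 2 \<bullet> v 3 = 0"
  proof -
    obtain v where ob: "obtuse_superbase L v" using exists_obtuse[OF lat] by blast
    obtain \<sigma> where s: "\<sigma> permutes {0..3}" "conorm (v \<circ> \<sigma>) 2 3 = 0" using perm_zero[OF ob V2] by blast
    have "obtuse_superbase L (v \<circ> \<sigma>)" by (rule perm_osb[OF ob s(1)])
    moreover have "(v \<circ> \<sigma>) 2 \<bullet> (v \<circ> \<sigma>) 3 = 0" using s(2) by (simp add: conorm_def)
    ultimately show ?thesis by blast
  qed
  have A2: "\<forall>v. obtuse_superbase L v \<and> v 2 \<bullet> v 3 = 0 \<longrightarrow>
        obtuse_superbase L (sbB2 v) \<and>
        (\<forall>u. obtuse_superbase L u \<longrightarrow> sb_isometric u v \<or> sb_isometric u (sbB2 v))"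
  proof (intro allI impI)
    fix v assume h: "obtuse_superbase L v \<and> v 2 \<bullet> v 3 = 0"
    have z: "conorm v 2 3 = 0" using h by (simp add: conorm_def)
    interpret v2base L v by (rule v2base_of[OF conjunct1[OF h] V2 z])
    show "obtuse_superbase L (sbB2 v) \<and> (\<forall>u. obtuse_superbase L u \<longrightarrow> sb_isometric u v \<or> sb_isometric u (sbB2 v))"
      using B2_obtuse[OF z] iso by blast
  qed
  have B: "\<forall>v. obtuse_superbase L v \<and> conorm v 2 3 = 0 \<longrightarrow>
        conorm (sbB2 v) 2 3 = 0 \<and> conorm (sbB2 v) 1 3 = conorm v 0 3 \<and>
        conorm (sbB2 v) 1 2 = conorm v 1 2 \<and> conorm (sbB2 v) 0 1 = conorm v 0 1 \<and>
        conorm (sbB2 v) 0 2 = conorm v 0 2 \<and> conorm (sbB2 v) 0 3 = conorm v 1 3"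
  proof (intro allI impI)
    fix v assume h: "obtuse_superbase L v \<and> conorm v 2 3 = 0"
    interpret obase L v by (rule obase_of[OF conjunct1[OF h]])
    show "conorm (sbB2 v) 2 3 = 0 \<and> conorm (sbB2 v) 1 3 = conorm v 0 3 \<and>
        conorm (sbB2 v) 1 2 = conorm v 1 2 \<and> conorm (sbB2 v) 0 1 = conorm v 0 1 \<and>
        conorm (sbB2 v) 0 2 = conorm v 0 2 \<and> conorm (sbB2 v) 0 3 = conorm v 1 3"
      using B2_conorms[OF conjunct2[OF h]] by simp
  qed
  have C1: "\<forall>v. obtuse_superbase L v \<longrightarrow>
        card {(i, j). i < j \<and> j < (4::nat) \<and> conorm v i j = 0} = 1 \<and>
        (\<exists>\<sigma>. \<sigma> permutes {0..3} \<and> conorm (v \<circ> \<sigma>) 2 3 = 0)"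
  proof (intro allI impI conjI)
    fix v assume ob: "obtuse_superbase L v"
    interpret obase L v by (rule obase_of[OF ob])
    show "card {(i, j). i < j \<and> j < (4::nat) \<and> conorm v i j = 0} = 1" by (rule one_zero[OF V2])
    show "\<exists>\<sigma>. \<sigma> permutes {0..3} \<and> conorm (v \<circ> \<sigma>) 2 3 = 0" by (rule perm_zero[OF ob V2])
  qed
  have C2: "\<forall>u w \<sigma> \<tau>. obtuse_superbase L u \<and> obtuse_superbase L w \<and>
        \<sigma> permutes {0..3} \<and> \<tau> permutes {0..3} \<and>
        conorm (u \<circ> \<sigma>) 2 3 = 0 \<and> conorm (w \<circ> \<tau>) 2 3 = 0 \<longrightarrow>
        conorm (w \<circ> \<tau>) 0 1 = conorm (u \<circ> \<sigma>) 0 1 \<and>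
        (\<exists>g\<in>D4. \<forall>k<4. sq_corner (w \<circ> \<tau>) k = sq_corner (u \<circ> \<sigma>) (g k))"
  proof (intro allI impI)
    fix u w \<sigma> \<tau>
    assume h: "obtuse_superbase L u \<and> obtuse_superbase L w \<and>
        \<sigma> permutes {0..3} \<and> \<tau> permutes {0..3} \<and>
        conorm (u \<circ> \<sigma>) 2 3 = 0 \<and> conorm (w \<circ> \<tau>) 2 3 = 0"
    have r: "obtuse_superbase L (u \<circ> \<sigma>)" using perm_osb h by blast
    have W: "obtuse_superbase L (w \<circ> \<tau>)" using perm_osb h by blast
    interpret v2base L "u \<circ> \<sigma>" by (rule v2base_of[OF r V2]) (use h in blast)
    obtain e b pl where ebp: "e \<in> {1, -1}" "b \<in> {0, 1::nat}" "pl \<in> set P24"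
      and wk: "\<forall>k<4. (w \<circ> \<tau>) k = of_int e *\<^sub>R Bv b (pl ! k)"
      using classify[OF W] by blast
    have rel: "conorm (w \<circ> \<tau>) i j = conorm (Bv b) (pl ! i) (pl ! j)" if "i < 4" "j < 4" for i j
      by (rule conorm_rel[OF wk ebp(1) that])
    show "conorm (w \<circ> \<tau>) 0 1 = conorm (u \<circ> \<sigma>) 0 1 \<and>
        (\<exists>g\<in>D4. \<forall>k<4. sq_corner (w \<circ> \<tau>) k = sq_corner (u \<circ> \<sigma>) (g k))"
      by (rule d4_core[OF ebp(2) ebp(3) rel]) (use h in blast)+
  qed
  show ?thesis using A1 A2 B C1 C2 by blast
qed


end
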